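(* Let $\Theta\subset\{1,\dots,n\}$ be non-empty. If $\Theta$ contains an odd integer, then the flag manifold $\mathcal F_\Theta$ of $\mathrm{Sp}(2n,\mathbb R)$ has Property (I).
   Context: $Je_i=(-1)^ie_{2n-i+1}$, $\omega(x,y)=x^TJy$, $\mathrm{Sp}(2n,\mathbb R)=\{g:g^TJg=J\}$. $\mathcal F_\Theta$ is the space of isotropic $\Theta$-flags $(V^i)_{i\in\Theta}$ ($V^i$ $\omega$-isotropic, $\dim V^i=i$, nested); flags $V,W$ are antipodal if $V^i\oplus (W^i)^{\perp_\omega}=\mathbb R^{2n}$ for all $i\in\Theta$, and $C(\tau)$ is the set of flags antipodal to $\tau$. $\tau_\Theta^i=\mathrm{Span}\{e_1,\dots,e_i\}$, $(\tau_\Theta^{\rm opp})^i=\mathrm{Span}\{e_{2n},\dots,e_{2n-i+1}\}$; $U_\Theta$ is the unipotent radical of the stabilizer $P_\Theta$ of $\tau_\Theta$, and each $\tau\in C(\tau_\Theta)$ is uniquely $u_\tau\tau^{\rm opp}_\Theta$ with $u_\tau\in U_\Theta$. The inversion map $\iota:C(\tau_\Theta)\to C(\tau_\Theta)$ is $\iota(\tau)=u_\tau^{-1}\tau^{\rm opp}_\Theta$; it preserves $C(\tau_\Theta)\cap C(\tau^{\rm opp}_\Theta)$. $\mathcal F_\Theta$ has Property (I) if $\iota$ leaves no connected component of $C(\tau_\Theta)\cap C(\tau^{\rm opp}_\Theta)$ invariant. *)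

theory Defs
  imports "HOL-Analysis.Analysis"
begin

text \<open>Vectors of R^m are functions nat => real supported on {1..m};
  m x m matrices are functions nat => nat => real supported on {1..m} x {1..m}.
  Throughout, m = 2n.\<close>

type_synonym vect = "nat \<Rightarrow> real"
type_synonym matr = "nat \<Rightarrow> nat \<Rightarrow> real"

definition Rn :: "nat \<Rightarrow> vect set" where
  "Rn m = {x. \<forall>k. k \<notin> {1..m} \<longrightarrow> x k = 0}"

definition Mats :: "nat \<Rightarrow> matr set" where
  "Mats m = {A. \<forall>i j. (i \<notin> {1..m} \<or> j \<notin> {1..m}) \<longrightarrow> A i j = 0}"

definition vzero :: vect where "vzero = (\<lambda>k. 0)"
definition vadd :: "vect \<Rightarrow> vect \<Rightarrow> vect" where "vadd x y = (\<lambda>k. x k + y k)"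
definition vsub :: "vect \<Rightarrow> vect \<Rightarrow> vect" where "vsub x y = (\<lambda>k. x k - y k)"

definition ev :: "nat \<Rightarrow> vect" where "ev i = (\<lambda>k. if k = i then 1 else 0)"

definition lin_comb :: "(nat \<Rightarrow> real) \<Rightarrow> vect list \<Rightarrow> vect" where
  "lin_comb c vs = (\<lambda>k. \<Sum>j<length vs. c j * (vs ! j) k)"

definition lspan :: "vect list \<Rightarrow> vect set" where
  "lspan vs = {lin_comb c vs | c. True}"

definition lin_indep :: "vect list \<Rightarrow> bool" where
  "lin_indep vs \<longleftrightarrow> (\<forall>c. lin_comb c vs = vzero \<longrightarrow> (\<forall>j<length vs. c j = 0))"

definition subspace_dim :: "nat \<Rightarrow> vect set \<Rightarrow> nat \<Rightarrow> bool" where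
  "subspace_dim m W d \<longleftrightarrow>
     (\<exists>vs. length vs = d \<and> set vs \<subseteq> Rn m \<and> lin_indep vs \<and> lspan vs = W)"

definition mvec :: "nat \<Rightarrow> matr \<Rightarrow> vect \<Rightarrow> vect" where
  "mvec m A x = (\<lambda>i. \<Sum>k\<in>{1..m}. A i k * x k)"

definition mmul :: "nat \<Rightarrow> matr \<Rightarrow> matr \<Rightarrow> matr" where
  "mmul m A B = (\<lambda>i j. \<Sum>k\<in>{1..m}. A i k * B k j)"

definition mtrans :: "matr \<Rightarrow> matr" where "mtrans A = (\<lambda>i j. A j i)"

definition idm :: "nat \<Rightarrow> matr" where
  "idm m = (\<lambda>i j. if i = j \<and> i \<in> {1..m} then 1 else 0)"

definition minv :: "nat \<Rightarrow> matr \<Rightarrow> matr" where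
  "minv m A = (THE B. B \<in> Mats m \<and> mmul m B A = idm m \<and> mmul m A B = idm m)"

definition Jm :: "nat \<Rightarrow> matr" where
  "Jm n = (\<lambda>a i. if a \<in> {1..2*n} \<and> i \<in> {1..2*n} \<and> a + i = 2*n + 1
                  then (-1::real) ^ i else 0)"

definition omega :: "nat \<Rightarrow> vect \<Rightarrow> vect \<Rightarrow> real" where
  "omega n x y = (\<Sum>a\<in>{1..2*n}. x a * mvec (2*n) (Jm n) y a)"

definition Sp :: "nat \<Rightarrow> matr set" where
  "Sp n = {g \<in> Mats (2*n). mmul (2*n) (mtrans g) (mmul (2*n) (Jm n) g) = Jm n}"

definition isotropic :: "nat \<Rightarrow> vect set \<Rightarrow> bool" where
  "isotropic n W \<longleftrightarrow> (\<forall>x\<in>W. \<forall>y\<in>W. omega n x y = 0)"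

definition omega_perp :: "nat \<Rightarrow> vect set \<Rightarrow> vect set" where
  "omega_perp n W = {y \<in> Rn (2*n). \<forall>x\<in>W. omega n x y = 0}"

text \<open>A Theta-flag is a map i |-> V^i, with V^i = {} for i not in Theta.\<close>
type_synonym flag = "nat \<Rightarrow> vect set"

definition iso_flags :: "nat \<Rightarrow> nat set \<Rightarrow> flag set" where
  "iso_flags n \<Theta> = {V.
      (\<forall>i\<in>\<Theta>. subspace_dim (2*n) (V i) i \<and> isotropic n (V i)) \<and>
      (\<forall>i\<in>\<Theta>. \<forall>j\<in>\<Theta>. i \<le> j \<longrightarrow> V i \<subseteq> V j) \<and>
      (\<forall>i. i \<notin> \<Theta> \<longrightarrow> V i = {})}"

definition direct_sum_eq :: "nat \<Rightarrow> vect set \<Rightarrow> vect set \<Rightarrow> bool" where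
  "direct_sum_eq m A B \<longleftrightarrow> {vadd x y | x y. x \<in> A \<and> y \<in> B} = Rn m \<and> A \<inter> B = {vzero}"

definition antipodal :: "nat \<Rightarrow> nat set \<Rightarrow> flag \<Rightarrow> flag \<Rightarrow> bool" where
  "antipodal n \<Theta> V W \<longleftrightarrow> (\<forall>i\<in>\<Theta>. direct_sum_eq (2*n) (V i) (omega_perp n (W i)))"

definition Cset :: "nat \<Rightarrow> nat set \<Rightarrow> flag \<Rightarrow> flag set" where
  "Cset n \<Theta> \<tau> = {V \<in> iso_flags n \<Theta>. antipodal n \<Theta> V \<tau>}"

definition tau :: "nat set \<Rightarrow> flag" where
  "tau \<Theta> = (\<lambda>i. if i \<in> \<Theta> then lspan (map ev [1..<i+1]) else {})"

definition tau_opp :: "nat \<Rightarrow> nat set \<Rightarrow> flag" where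
  "tau_opp n \<Theta> = (\<lambda>i. if i \<in> \<Theta> then lspan (map ev [2*n-i+1..<2*n+1]) else {})"

definition act :: "nat \<Rightarrow> matr \<Rightarrow> flag \<Rightarrow> flag" where
  "act n g V = (\<lambda>i. mvec (2*n) g ` V i)"

text \<open>Unipotent radical of the stabilizer P_Theta of tau_Theta: the elements of Sp(2n)
  preserving the filtration
  0 < tau^(t1) < ... < tau^(tk) < (tau^(tk))^perp < ... < (tau^(t1))^perp < R^2n
  and acting trivially on its successive quotients.  Here (tau^i)^perp = span(e_1..e_(2n-i)).\<close>
definition Estd :: "nat \<Rightarrow> vect set" where
  "Estd k = lspan (map ev [1..<k+1])"

definition filt_idx :: "nat \<Rightarrow> nat set \<Rightarrow> nat set" where
  "filt_idx n \<Theta> = {0, 2*n} \<union> \<Theta> \<union> (\<lambda>k. 2*n - k) ` \<Theta>"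

definition U_Theta :: "nat \<Rightarrow> nat set \<Rightarrow> matr set" where
  "U_Theta n \<Theta> = {g \<in> Sp n. \<forall>k\<in>filt_idx n \<Theta>. \<forall>k'\<in>filt_idx n \<Theta>.
      (k < k' \<and> (\<forall>m\<in>filt_idx n \<Theta>. \<not> (k < m \<and> m < k'))) \<longrightarrow>
      (\<forall>v\<in>Estd k'. vsub (mvec (2*n) g v) v \<in> Estd k)}"

definition u_of :: "nat \<Rightarrow> nat set \<Rightarrow> flag \<Rightarrow> matr" where
  "u_of n \<Theta> V = (THE u. u \<in> U_Theta n \<Theta> \<and> act n u (tau_opp n \<Theta>) = V)"

definition iota :: "nat \<Rightarrow> nat set \<Rightarrow> flag \<Rightarrow> flag" where
  "iota n \<Theta> V = act n (minv (2*n) (u_of n \<Theta> V)) (tau_opp n \<Theta>)"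

text \<open>Topology: a subspace is identified with its orthogonal projection matrix
  (standard embedding of the Grassmannian); a flag with the tuple of these.\<close>
definition vinner :: "nat \<Rightarrow> vect \<Rightarrow> vect \<Rightarrow> real" where
  "vinner m x y = (\<Sum>k\<in>{1..m}. x k * y k)"

definition projm :: "nat \<Rightarrow> vect set \<Rightarrow> matr" where
  "projm m W = (THE P. P \<in> Mats m \<and>
      (\<forall>x\<in>Rn m. mvec m P x \<in> W \<and> (\<forall>w\<in>W. vinner m (vsub x (mvec m P x)) w = 0)))"

definition flag_embed :: "nat \<Rightarrow> nat set \<Rightarrow> flag \<Rightarrow> (nat \<Rightarrow> matr)" where
  "flag_embed n \<Theta> V = (\<lambda>i. if i \<in> \<Theta> then projm (2*n) (V i) else (\<lambda>a b. 0))"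

definition flag_top :: "nat \<Rightarrow> nat set \<Rightarrow> flag topology" where
  "flag_top n \<Theta> = pullback_topology (iso_flags n \<Theta>) (flag_embed n \<Theta>) euclidean"

definition Property_I :: "nat \<Rightarrow> nat set \<Rightarrow> bool" where
  "Property_I n \<Theta> \<longleftrightarrow>
     (\<forall>K \<in> connected_components_of
            (subtopology (flag_top n \<Theta>) (Cset n \<Theta> (tau \<Theta>) \<inter> Cset n \<Theta> (tau_opp n \<Theta>))).
        iota n \<Theta> ` K \<noteq> K)"

end

theory Submission
  imports Defs "Jordan_Normal_Form.Determinant"
begin


definition vS :: "nat set \<Rightarrow> vect set" where
  "vS S = {x. \<forall>c. c \<notin> S \<longrightarrow> x c = 0}"

lemma vS_iff: "x \<in> vS S \<longleftrightarrow> (\<forall>c. c \<notin> S \<longrightarrow> x c = 0)"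
  by (simp add: vS_def)

lemma lin_comb_map: "lin_comb c (map f [a..<b]) k = (\<Sum>j<b-a. c j * f (a+j) k)"
  unfolding lin_comb_def by (auto intro!: sum.cong)

lemma sum_ev_single:
  "finite S \<Longrightarrow> (\<Sum>c\<in>S. x c * ev c k) = (if k \<in> S then x k else 0)"
  by (simp add: ev_def if_distrib cong: if_cong)

lemma lspan_ev: "lspan (map ev [a..<b]) = vS {a..<b}"
proof (intro equalityI subsetI)
  fix x assume "x \<in> lspan (map ev [a..<b])"
  then obtain c where x: "x = lin_comb c (map ev [a..<b])" unfolding lspan_def by auto
  show "x \<in> vS {a..<b}" unfolding vS_iff x lin_comb_map
    by (auto simp: ev_def intro!: sum.neutral)
next
  fix x assume x: "x \<in> vS {a..<b}"
  have "x = lin_comb (\<lambda>j. x (a+j)) (map ev [a..<b])"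
  proof
    fix k
    have "lin_comb (\<lambda>j. x (a+j)) (map ev [a..<b]) k = (\<Sum>j<b-a. x (a+j) * ev (a+j) k)"
      by (simp add: lin_comb_map)
    also have "\<dots> = (\<Sum>c\<in>(\<lambda>j. a+j) ` {..<b-a}. x c * ev c k)"
      by (subst sum.reindex) (auto simp: inj_on_def)
    also have "(\<lambda>j. a+j) ` {..<b-a} = {a..<b}"
      apply (auto simp: image_iff) apply (rule_tac x="x - a" in bexI) by auto
    also have "(\<Sum>c\<in>{a..<b}. x c * ev c k) = x k"
      using x by (auto simp: sum_ev_single vS_iff)
    finally show "x k = lin_comb (\<lambda>j. x (a+j)) (map ev [a..<b]) k" by simp
  qed
  then show "x \<in> lspan (map ev [a..<b])" unfolding lspan_def by blast
qed

lemma Rn_vS: "Rn m = vS {1..m}"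
  by (auto simp: Rn_def vS_def)

lemma Estd_vS: "Estd k = vS {1..k}"
  unfolding Estd_def lspan_ev by (auto simp: vS_def)

lemma tau_vS: "i \<in> \<Theta> \<Longrightarrow> tau \<Theta> i = vS {1..i}"
  unfolding tau_def lspan_ev by (auto simp: vS_def)

lemma tau_opp_vS: "i \<in> \<Theta> \<Longrightarrow> tau_opp n \<Theta> i = vS {2*n-i+1..2*n}"
  unfolding tau_opp_def lspan_ev by (auto simp: vS_def)

lemma vS_mono: "S \<subseteq> S' \<Longrightarrow> vS S \<subseteq> vS S'"
  by (auto simp: vS_def)

lemma ev_vS: "c \<in> S \<Longrightarrow> ev c \<in> vS S"
  by (auto simp: vS_def ev_def)

definition lsub :: "vect set \<Rightarrow> bool" where
  "lsub W \<longleftrightarrow> vzero \<in> W \<and> (\<forall>x\<in>W. \<forall>y\<in>W. (\<lambda>k. x k + y k) \<in> W) \<and> (\<forall>a. \<forall>x\<in>W. (\<lambda>k. a * x k) \<in> W)"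

lemma lsubD:
  assumes "lsub W"
  shows "vzero \<in> W" "(\<lambda>k. 0) \<in> W" "x \<in> W \<Longrightarrow> y \<in> W \<Longrightarrow> (\<lambda>k. x k + y k) \<in> W"
    "x \<in> W \<Longrightarrow> (\<lambda>k. a * x k) \<in> W"
  using assms unfolding lsub_def vzero_def by auto

lemma lsub_diff: assumes "lsub W" "x \<in> W" "y \<in> W" shows "(\<lambda>k. x k - y k) \<in> W"
proof -
  have "(\<lambda>k. (-1) * y k) \<in> W" using lsubD(4)[OF assms(1) assms(3)] .
  from lsubD(3)[OF assms(1) assms(2) this] show ?thesis by simp
qed

lemma lsub_sum: assumes "lsub W" "finite I" "\<And>i. i \<in> I \<Longrightarrow> f i \<in> W"
  shows "(\<lambda>k. \<Sum>i\<in>I. c i * f i k) \<in> W"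
  using assms(2,3)
proof (induction I rule: finite_induct)
  case empty then show ?case using lsubD(2)[OF assms(1)] by simp
next
  case (insert i I)
  have "(\<lambda>k. c i * f i k) \<in> W" using insert lsubD(4)[OF assms(1)] by auto
  from lsubD(3)[OF assms(1) this] insert show ?case by auto
qed

lemma lsub_vS: "lsub (vS S)"
  by (auto simp: lsub_def vS_def vzero_def)

lemma lsub_lspan: "lsub (lspan vs)"
proof -
  have "vzero = lin_comb (\<lambda>_. 0) vs" by (auto simp: lin_comb_def vzero_def)
  moreover have "(\<lambda>k. lin_comb c vs k + lin_comb d vs k) = lin_comb (\<lambda>j. c j + d j) vs" for c d
    by (auto simp: lin_comb_def sum.distrib algebra_simps)
  moreover have "(\<lambda>k. a * lin_comb c vs k) = lin_comb (\<lambda>j. a * c j) vs" for a c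
    by (auto simp: lin_comb_def sum_distrib_left algebra_simps)
  ultimately show ?thesis unfolding lsub_def lspan_def by blast
qed

lemma Jm_at: "Jm n a k = (if a \<in> {1..2*n} \<and> k = 2*n+1-a then (-1)^k else 0)"
  unfolding Jm_def by auto

lemma mvec_Jm: "mvec (2*n) (Jm n) y a = (if a \<in> {1..2*n} then (-1)^(2*n+1-a) * y (2*n+1-a) else 0)"
proof -
  have "mvec (2*n) (Jm n) y a = (\<Sum>k\<in>{1..2*n}. (if a \<in> {1..2*n} \<and> k = 2*n+1-a then (-1)^k * y k else 0))"
    unfolding mvec_def Jm_at by (auto intro!: sum.cong)
  also have "\<dots> = (if a \<in> {1..2*n} then (-1)^(2*n+1-a) * y (2*n+1-a) else 0)"
    by (cases "a \<in> {1..2*n}") (auto simp: sum.delta)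
  finally show ?thesis .
qed

lemma omega_eq: "omega n x y = (\<Sum>a\<in>{1..2*n}. (-1)^(2*n+1-a) * x a * y (2*n+1-a))"
  unfolding omega_def mvec_Jm by (auto intro!: sum.cong)


lemma neg1_pow_add_odd: "odd (a + b) \<Longrightarrow> (-1::real)^a = - ((-1)^b)"
  by (auto simp: minus_one_power_iff)

lemma omega_ev_left: "i \<in> {1..2*n} \<Longrightarrow> omega n (ev i) y = (-1)^(2*n+1-i) * y (2*n+1-i)"
proof -
  assume i: "i \<in> {1..2*n}"
  have "omega n (ev i) y = (\<Sum>a\<in>{1..2*n}. if a = i then (-1)^(2*n+1-a) * y (2*n+1-a) else 0)"
    unfolding omega_eq by (rule sum.cong) (auto simp: ev_def)
  also have "\<dots> = (-1)^(2*n+1-i) * y (2*n+1-i)" using i by (simp add: sum.delta)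
  finally show ?thesis .
qed

lemma omega_ev_left_out: "i \<notin> {1..2*n} \<Longrightarrow> omega n (ev i) y = 0"
  unfolding omega_eq by (auto simp: ev_def intro!: sum.neutral)

lemma omega_ev_right: "j \<in> {1..2*n} \<Longrightarrow> omega n x (ev j) = (-1)^j * x (2*n+1-j)"
proof -
  assume j: "j \<in> {1..2*n}"
  have "omega n x (ev j) = (\<Sum>a\<in>{1..2*n}. if a = 2*n+1-j then (-1)^(2*n+1-a) * x a else 0)"
    unfolding omega_eq by (rule sum.cong) (auto simp: ev_def)
  also have "\<dots> = (-1)^j * x (2*n+1-j)" using j by (auto simp: sum.delta)
  finally show ?thesis .
qed

lemma Jm_omega: "Jm n i j = omega n (ev i) (ev j)"
proof (cases "i \<in> {1..2*n}")
  case True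
  then show ?thesis by (simp add: omega_ev_left) (auto simp: Jm_at ev_def)
next
  case False
  then show ?thesis by (simp add: omega_ev_left_out) (auto simp: Jm_at)
qed

lemma omega_antisym: "omega n x y = - omega n y x"
proof -
  have "omega n y x = (\<Sum>a\<in>{1..2*n}. (-1)^(2*n+1-a) * y a * x (2*n+1-a))" by (rule omega_eq)
  also have "\<dots> = (\<Sum>b\<in>{1..2*n}. (-1)^b * y (2*n+1-b) * x b)"
    by (rule sum.reindex_bij_witness[of _ "\<lambda>b. 2*n+1-b" "\<lambda>a. 2*n+1-a"]) auto
  also have "\<dots> = (\<Sum>b\<in>{1..2*n}. - ((-1)^(2*n+1-b) * x b * y (2*n+1-b)))"
  proof (rule sum.cong)
    fix b assume "b \<in> {1..2*n}"
    then have "odd (b + (2*n+1-b))" by auto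
    then have "(-1::real)^b = - ((-1)^(2*n+1-b))" by (rule neg1_pow_add_odd)
    then show "(-1)^b * y (2*n+1-b) * x b = - ((-1)^(2*n+1-b) * x b * y (2*n+1-b))" by simp
  qed simp
  also have "\<dots> = - omega n x y" unfolding omega_eq by (simp add: sum_negf)
  finally show ?thesis by simp
qed


lemma omega_add_left: "omega n (\<lambda>k. x k + y k) z = omega n x z + omega n y z"
  unfolding omega_eq by (simp add: algebra_simps sum.distrib)

lemma omega_diff_left: "omega n (\<lambda>k. x k - y k) z = omega n x z - omega n y z"
  unfolding omega_eq by (simp add: algebra_simps sum_subtractf)

lemma omega_scale_left: "omega n (\<lambda>k. a * x k) z = a * omega n x z"
  unfolding omega_eq by (simp add: algebra_simps sum_distrib_left)

lemma omega_add_right: "omega n z (\<lambda>k. x k + y k) = omega n z x + omega n z y"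
  by (subst (1 2 3) omega_antisym) (simp add: omega_add_left)

lemma omega_diff_right: "omega n z (\<lambda>k. x k - y k) = omega n z x - omega n z y"
  by (subst (1 2 3) omega_antisym) (simp add: omega_diff_left)

lemma omega_scale_right: "omega n z (\<lambda>k. a * x k) = a * omega n z x"
  by (subst (1 2) omega_antisym) (simp add: omega_scale_left)

lemma omega_zero_left: "omega n (\<lambda>k. 0) z = 0"
  unfolding omega_eq by simp

lemma omega_sum_left: "finite I \<Longrightarrow> omega n (\<lambda>k. \<Sum>i\<in>I. c i * f i k) y = (\<Sum>i\<in>I. c i * omega n (f i) y)"
proof (induction I rule: finite_induct)
  case empty then show ?case by (simp add: omega_zero_left)
next
  case (insert i I)
  have "omega n (\<lambda>k. \<Sum>i\<in>insert i I. c i * f i k) y = omega n (\<lambda>k. c i * f i k + (\<Sum>i\<in>I. c i * f i k)) y"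
    using insert by simp
  also have "\<dots> = c i * omega n (f i) y + omega n (\<lambda>k. \<Sum>i\<in>I. c i * f i k) y"
    by (subst omega_add_left) (simp add: omega_scale_left)
  finally show ?case using insert by simp
qed

lemma omega_sum_right: "finite I \<Longrightarrow> omega n x (\<lambda>k. \<Sum>i\<in>I. c i * f i k) = (\<Sum>i\<in>I. c i * omega n x (f i))"
  by (subst omega_antisym) (simp add: omega_sum_left omega_antisym[of n x] sum_negf)

lemma omega_vanish:
  assumes "x \<in> vS S" "y \<in> vS S'" "\<And>a. a \<in> S \<Longrightarrow> a \<in> {1..2*n} \<Longrightarrow> 2*n+1-a \<notin> S'"
  shows "omega n x y = 0"
  unfolding omega_eq
proof (rule sum.neutral, rule ballI)
  fix a assume a: "a \<in> {1..2*n}"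
  show "(-1)^(2*n+1-a) * x a * y (2*n+1-a) = 0"
  proof (cases "a \<in> S")
    case True then show ?thesis using assms a by (auto simp: vS_def)
  next
    case False then show ?thesis using assms by (auto simp: vS_def)
  qed
qed

lemma omega_perp_tau:
  assumes "i \<le> n"
  shows "omega_perp n (vS {1..i}) = vS {1..2*n-i}"
proof (intro equalityI subsetI)
  fix y assume y: "y \<in> omega_perp n (vS {1..i})"
  then have yR: "y \<in> vS {1..2*n}" and orth: "\<And>x. x \<in> vS {1..i} \<Longrightarrow> omega n x y = 0"
    unfolding omega_perp_def Rn_vS by auto
  show "y \<in> vS {1..2*n-i}" unfolding vS_iff
  proof (intro allI impI)
    fix c assume c: "c \<notin> {1..2*n-i}"
    show "y c = 0"
    proof (cases "c \<in> {1..2*n}")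
      case False then show ?thesis using yR by (auto simp: vS_def)
    next
      case True
      define a where "a = 2*n+1-c"
      have a: "a \<in> {1..i}" "a \<in> {1..2*n}" "2*n+1-a = c" using True c assms by (auto simp: a_def)
      have "omega n (ev a) y = 0" using orth[OF ev_vS[OF a(1)]] .
      then show ?thesis using a by (simp add: omega_ev_left)
    qed
  qed
next
  fix y assume y: "y \<in> vS {1..2*n-i}"
  have "y \<in> Rn (2*n)" using y vS_mono[of "{1..2*n-i}" "{1..2*n}"] by (auto simp: Rn_vS)
  moreover have "omega n x y = 0" if "x \<in> vS {1..i}" for x
    by (rule omega_vanish[OF that y]) auto
  ultimately show "y \<in> omega_perp n (vS {1..i})" unfolding omega_perp_def by auto
qed

lemma omega_perp_tau_opp:
  assumes "i \<le> n"
  shows "omega_perp n (vS {2*n-i+1..2*n}) = vS {i+1..2*n}"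
proof (intro equalityI subsetI)
  fix y assume y: "y \<in> omega_perp n (vS {2*n-i+1..2*n})"
  then have yR: "y \<in> vS {1..2*n}" and orth: "\<And>x. x \<in> vS {2*n-i+1..2*n} \<Longrightarrow> omega n x y = 0"
    unfolding omega_perp_def Rn_vS by auto
  show "y \<in> vS {i+1..2*n}" unfolding vS_iff
  proof (intro allI impI)
    fix c assume c: "c \<notin> {i+1..2*n}"
    show "y c = 0"
    proof (cases "c \<in> {1..2*n}")
      case False then show ?thesis using yR by (auto simp: vS_def)
    next
      case True
      define a where "a = 2*n+1-c"
      have a: "a \<in> {2*n-i+1..2*n}" "a \<in> {1..2*n}" "2*n+1-a = c" using True c assms by (auto simp: a_def)
      have "omega n (ev a) y = 0" using orth[OF ev_vS[OF a(1)]] .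
      then show ?thesis using a by (simp add: omega_ev_left)
    qed
  qed
next
  fix y assume y: "y \<in> vS {i+1..2*n}"
  have "y \<in> Rn (2*n)" using y vS_mono[of "{i+1..2*n}" "{1..2*n}"] by (auto simp: Rn_vS)
  moreover have "omega n x y = 0" if "x \<in> vS {2*n-i+1..2*n}" for x
    by (rule omega_vanish[OF that y]) auto
  ultimately show "y \<in> omega_perp n (vS {2*n-i+1..2*n})" unfolding omega_perp_def by auto
qed


section \<open>Filtration indices\<close>

definition predF :: "nat \<Rightarrow> nat set \<Rightarrow> nat \<Rightarrow> nat" where
  "predF n \<Theta> c = Max {x \<in> filt_idx n \<Theta>. x < c}"

definition succF :: "nat \<Rightarrow> nat set \<Rightarrow> nat \<Rightarrow> nat" where
  "succF n \<Theta> c = Min {x \<in> filt_idx n \<Theta>. c \<le> x}"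

lemma filt_finite: "finite \<Theta> \<Longrightarrow> finite (filt_idx n \<Theta>)"
  unfolding filt_idx_def by auto

lemma filt_0: "0 \<in> filt_idx n \<Theta>" and filt_2n: "2*n \<in> filt_idx n \<Theta>"
  unfolding filt_idx_def by auto

lemma filt_le: "\<Theta> \<subseteq> {1..n} \<Longrightarrow> x \<in> filt_idx n \<Theta> \<Longrightarrow> x \<le> 2*n"
  unfolding filt_idx_def by auto

lemma filt_sym: "\<Theta> \<subseteq> {1..n} \<Longrightarrow> x \<in> filt_idx n \<Theta> \<Longrightarrow> 2*n - x \<in> filt_idx n \<Theta>"
proof -
  assume Th: "\<Theta> \<subseteq> {1..n}" and x: "x \<in> filt_idx n \<Theta>"
  then consider "x = 0" | "x = 2*n" | "x \<in> \<Theta>" | t where "t \<in> \<Theta>" "x = 2*n - t"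
    unfolding filt_idx_def by auto
  then show ?thesis
  proof cases
    case 4
    then have "t \<le> 2*n" using Th by auto
    then have "2*n - x = t" using 4 by simp
    then show ?thesis using 4 unfolding filt_idx_def by auto
  next
    case 3 then show ?thesis unfolding filt_idx_def by blast
  qed (auto simp: filt_idx_def)
qed

lemma Theta_finite: "\<Theta> \<subseteq> {1..(n::nat)} \<Longrightarrow> finite \<Theta>"
  by (erule finite_subset) simp

context
  fixes n :: nat and \<Theta> :: "nat set"
  assumes Th: "\<Theta> \<subseteq> {1..n}"
begin

lemma predF_props:
  assumes "1 \<le> c"
  shows "predF n \<Theta> c \<in> filt_idx n \<Theta>" "predF n \<Theta> c < c"
    "\<And>x. x \<in> filt_idx n \<Theta> \<Longrightarrow> x < c \<Longrightarrow> x \<le> predF n \<Theta> c"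
proof -
  have fin: "finite {x \<in> filt_idx n \<Theta>. x < c}" using filt_finite[OF Theta_finite[OF Th]] by auto
  have ne: "0 \<in> {x \<in> filt_idx n \<Theta>. x < c}" using assms filt_0 by auto
  have "predF n \<Theta> c \<in> {x \<in> filt_idx n \<Theta>. x < c}"
    unfolding predF_def by (rule Max_in[OF fin]) (use ne in blast)
  then show "predF n \<Theta> c \<in> filt_idx n \<Theta>" "predF n \<Theta> c < c" by auto
  show "\<And>x. x \<in> filt_idx n \<Theta> \<Longrightarrow> x < c \<Longrightarrow> x \<le> predF n \<Theta> c"
    using Max_ge[OF fin] unfolding predF_def by auto
qed

lemma succF_props:
  assumes "c \<le> 2*n"
  shows "succF n \<Theta> c \<in> filt_idx n \<Theta>" "c \<le> succF n \<Theta> c"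
    "\<And>x. x \<in> filt_idx n \<Theta> \<Longrightarrow> c \<le> x \<Longrightarrow> succF n \<Theta> c \<le> x"
proof -
  have fin: "finite {x \<in> filt_idx n \<Theta>. c \<le> x}" using filt_finite[OF Theta_finite[OF Th]] by auto
  have ne: "2*n \<in> {x \<in> filt_idx n \<Theta>. c \<le> x}" using assms filt_2n by auto
  have "succF n \<Theta> c \<in> {x \<in> filt_idx n \<Theta>. c \<le> x}"
    unfolding succF_def by (rule Min_in[OF fin]) (use ne in blast)
  then show "succF n \<Theta> c \<in> filt_idx n \<Theta>" "c \<le> succF n \<Theta> c" by auto
  show "\<And>x. x \<in> filt_idx n \<Theta> \<Longrightarrow> c \<le> x \<Longrightarrow> succF n \<Theta> c \<le> x"
    using Min_le[OF fin] unfolding succF_def by auto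
qed

end

lemma mvec_ev: "c \<in> {1..m} \<Longrightarrow> mvec m u (ev c) = (\<lambda>i. u i c)"
proof
  fix i assume c: "c \<in> {1..m}"
  have "mvec m u (ev c) i = (\<Sum>k\<in>{1..m}. if k = c then u i k else 0)"
    unfolding mvec_def by (rule sum.cong) (auto simp: ev_def)
  then show "mvec m u (ev c) i = u i c" using c by (simp add: sum.delta)
qed

lemma mvec_alt: "mvec m u x = (\<lambda>i. \<Sum>c\<in>{1..m}. x c * u i c)"
  unfolding mvec_def by (auto simp: mult.commute)

lemma mvec_zero: "mvec m u (\<lambda>k. 0) = (\<lambda>k. 0)"
  unfolding mvec_def by simp

lemma mvec_add_ev: "c \<in> {1..m} \<Longrightarrow> mvec m u (\<lambda>k. w k + a * ev c k) = (\<lambda>i. mvec m u w i + a * u i c)"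
proof -
  assume c: "c \<in> {1..m}"
  have "mvec m u (\<lambda>k. w k + a * ev c k) = (\<lambda>i. mvec m u w i + a * mvec m u (ev c) i)"
    unfolding mvec_def by (auto simp: algebra_simps sum.distrib sum_distrib_left)
  then show ?thesis using mvec_ev[OF c] by simp
qed

lemma mvec_vS: assumes "x \<in> vS S" "S \<subseteq> {1..m}"
  shows "mvec m u x = (\<lambda>i. \<Sum>c\<in>S. x c * u i c)"
proof
  fix i
  have "mvec m u x i = (\<Sum>c\<in>{1..m}. x c * u i c)" by (simp add: mvec_alt)
  also have "\<dots> = (\<Sum>c\<in>S. x c * u i c)"
    by (rule sum.mono_neutral_right) (use assms in \<open>auto simp: vS_def\<close>)
  finally show "mvec m u x i = (\<Sum>c\<in>S. x c * u i c)" .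
qed

section \<open>Symplectic group\<close>

lemma Sp_entry: "mmul (2*n) (mtrans g) (mmul (2*n) (Jm n) g) i j = omega n (\<lambda>a. g a i) (\<lambda>a. g a j)"
  unfolding mmul_def mtrans_def omega_def mvec_def by (simp add: sum_distrib_left)

lemma Sp_iff:
  assumes "g \<in> Mats (2*n)"
  shows "g \<in> Sp n \<longleftrightarrow> (\<forall>i\<in>{1..2*n}. \<forall>j\<in>{1..2*n}. omega n (\<lambda>a. g a i) (\<lambda>a. g a j) = omega n (ev i) (ev j))"
proof -
  have col0: "(\<lambda>a. g a i) = (\<lambda>a. 0)" if "i \<notin> {1..2*n}" for i
    using assms that unfolding Mats_def by auto
  have z: "omega n (\<lambda>a. 0) y = 0" for y by (simp add: omega_eq)
  have z2: "omega n y (\<lambda>a. 0) = 0" for y by (simp add: omega_eq)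
  have "g \<in> Sp n \<longleftrightarrow> (\<forall>i j. omega n (\<lambda>a. g a i) (\<lambda>a. g a j) = omega n (ev i) (ev j))"
    unfolding Sp_def using assms by (auto simp: fun_eq_iff Sp_entry Jm_omega)
  also have "\<dots> \<longleftrightarrow> (\<forall>i\<in>{1..2*n}. \<forall>j\<in>{1..2*n}. omega n (\<lambda>a. g a i) (\<lambda>a. g a j) = omega n (ev i) (ev j))"
  proof
    assume H: "\<forall>i\<in>{1..2*n}. \<forall>j\<in>{1..2*n}. omega n (\<lambda>a. g a i) (\<lambda>a. g a j) = omega n (ev i) (ev j)"
    show "\<forall>i j. omega n (\<lambda>a. g a i) (\<lambda>a. g a j) = omega n (ev i) (ev j)"
    proof (intro allI)
      fix i j
      show "omega n (\<lambda>a. g a i) (\<lambda>a. g a j) = omega n (ev i) (ev j)"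
      proof (cases "i \<in> {1..2*n} \<and> j \<in> {1..2*n}")
        case True then show ?thesis using H by auto
      next
        case False
        then consider "i \<notin> {1..2*n}" | "j \<notin> {1..2*n}" by blast
        then show ?thesis
        proof cases
          case 1 note i = this
          show ?thesis using col0[OF i] z omega_ev_left_out[OF i] by simp
        next
          case 2 note j = this
          have "omega n (ev i) (ev j) = 0" using omega_antisym[of n "ev i"] omega_ev_left_out[OF j] by simp
          then show ?thesis using col0[OF j] z2 by simp
        qed
      qed
    qed
  qed auto
  finally show ?thesis .
qed

definition colprop :: "nat \<Rightarrow> nat set \<Rightarrow> matr \<Rightarrow> bool" where
  "colprop n \<Theta> u \<longleftrightarrow> (\<forall>c\<in>{1..2*n}. \<forall>i. i \<notin> {1..predF n \<Theta> c} \<longrightarrow> u i c = (if i = c then 1 else 0))"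

context
  fixes n :: nat and \<Theta> :: "nat set"
  assumes Th: "\<Theta> \<subseteq> {1..n}"
begin

lemma U_colprop: assumes "u \<in> U_Theta n \<Theta>" shows "colprop n \<Theta> u"
  unfolding colprop_def
proof (intro ballI allI impI)
  fix c i assume c: "c \<in> {1..2*n}" and i: "i \<notin> {1..predF n \<Theta> c}"
  let ?k = "predF n \<Theta> c" and ?k' = "succF n \<Theta> c"
  have p: "?k \<in> filt_idx n \<Theta>" "?k < c" "\<And>x. x \<in> filt_idx n \<Theta> \<Longrightarrow> x < c \<Longrightarrow> x \<le> ?k"
    using predF_props[OF Th] c by auto
  have s: "?k' \<in> filt_idx n \<Theta>" "c \<le> ?k'" "\<And>x. x \<in> filt_idx n \<Theta> \<Longrightarrow> c \<le> x \<Longrightarrow> ?k' \<le> x"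
    using succF_props[OF Th] c by auto
  have cons: "?k < ?k' \<and> (\<forall>m\<in>filt_idx n \<Theta>. \<not> (?k < m \<and> m < ?k'))"
    using p s by (metis leD not_le_imp_less order.strict_trans2)
  have "ev c \<in> Estd ?k'" unfolding Estd_vS using s c by (auto intro: ev_vS)
  then have "vsub (mvec (2*n) u (ev c)) (ev c) \<in> Estd ?k"
    using assms p(1) s(1) cons unfolding U_Theta_def by blast
  then have "u i c - ev c i = 0" using i mvec_ev[OF c] unfolding Estd_vS vS_def vsub_def by auto
  then show "u i c = (if i = c then 1 else 0)" by (auto simp: ev_def)
qed

lemma colprop_diag: "colprop n \<Theta> u \<Longrightarrow> c \<in> {1..2*n} \<Longrightarrow> u c c = 1"
  unfolding colprop_def using predF_props[OF Th, of c] by auto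

lemma colprop_low: "colprop n \<Theta> u \<Longrightarrow> c \<in> {1..2*n} \<Longrightarrow> c < i \<Longrightarrow> u i c = 0"
  unfolding colprop_def using predF_props[OF Th, of c] by auto

lemma colprop_col: "colprop n \<Theta> u \<Longrightarrow> c \<in> {1..2*n} \<Longrightarrow> (\<lambda>i. u i c - ev c i) \<in> vS {1..predF n \<Theta> c}"
  unfolding colprop_def vS_def ev_def by auto

lemma colprop_U: assumes "u \<in> Sp n" "colprop n \<Theta> u" shows "u \<in> U_Theta n \<Theta>"
  unfolding U_Theta_def
proof (intro CollectI conjI ballI impI assms(1))
  fix k k' v
  assume k: "k \<in> filt_idx n \<Theta>" and k': "k' \<in> filt_idx n \<Theta>"
    and cons: "k < k' \<and> (\<forall>m\<in>filt_idx n \<Theta>. \<not> (k < m \<and> m < k'))" and v: "v \<in> Estd k'"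
  have k'le: "k' \<le> 2*n" using filt_le[OF Th k'] .
  have vS': "v \<in> vS {1..k'}" using v by (simp add: Estd_vS)
  have um: "u \<in> Mats (2*n)" using assms(1) by (simp add: Sp_def)
  show "vsub (mvec (2*n) u v) v \<in> Estd k"
    unfolding Estd_vS vS_iff
  proof (intro allI impI)
    fix i assume i: "i \<notin> {1..k}"
    have eq: "u i c = (if i = c then 1 else 0)" if "c \<in> {1..k'}" for c
    proof -
      have c: "c \<in> {1..2*n}" using that k'le by auto
      have "i \<notin> {1..predF n \<Theta> c}"
      proof (cases "c \<le> k")
        case True then show ?thesis using i predF_props(2)[OF Th, of c] c by auto
      next
        case False
        have "predF n \<Theta> c = k"
        proof (rule antisym)
          show "k \<le> predF n \<Theta> c" using predF_props(3)[OF Th, of c k] k False c by auto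
          show "predF n \<Theta> c \<le> k"
            using predF_props(1,2)[OF Th, of c] c cons that by (metis atLeastAtMost_iff not_le order.strict_trans2)
        qed
        then show ?thesis using i by simp
      qed
      then show ?thesis using assms(2) c unfolding colprop_def by auto
    qed
    have "mvec (2*n) u v i = (\<Sum>c\<in>{1..k'}. v c * u i c)"
      using mvec_vS[OF vS', of "2*n" u] k'le by auto
    also have "\<dots> = (\<Sum>c\<in>{1..k'}. if c = i then v c else 0)"
      by (rule sum.cong) (auto simp: eq)
    also have "\<dots> = v i" using vS' by (auto simp: vS_def sum.delta)
    finally show "vsub (mvec (2*n) u v) v i = 0" by (simp add: vsub_def)
  qed
qed

end


lemma lspan_Rn: assumes "set vs \<subseteq> Rn m" shows "lspan vs \<subseteq> Rn m"
proof
  fix x assume "x \<in> lspan vs"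
  then obtain c where x: "x = lin_comb c vs" unfolding lspan_def by auto
  have "(\<lambda>k. \<Sum>j\<in>{..<length vs}. c j * (vs ! j) k) \<in> vS {1..m}"
    by (rule lsub_sum[OF lsub_vS]) (use assms in \<open>auto simp: Rn_vS\<close>)
  then show "x \<in> Rn m" unfolding x lin_comb_def Rn_vS by simp
qed

lemma iso_flagsD:
  assumes "V \<in> iso_flags n \<Theta>" "i \<in> \<Theta>"
  shows "lsub (V i)" "V i \<subseteq> vS {1..2*n}" "isotropic n (V i)"
    "\<And>j. j \<in> \<Theta> \<Longrightarrow> i \<le> j \<Longrightarrow> V i \<subseteq> V j"
proof -
  obtain vs where vs: "set vs \<subseteq> Rn (2*n)" "lspan vs = V i"
    using assms unfolding iso_flags_def subspace_dim_def by blast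
  show "lsub (V i)" using lsub_lspan vs by metis
  show "V i \<subseteq> vS {1..2*n}" using lspan_Rn[OF vs(1)] vs(2) by (simp add: Rn_vS)
  show "isotropic n (V i)" using assms unfolding iso_flags_def by blast
  show "\<And>j. j \<in> \<Theta> \<Longrightarrow> i \<le> j \<Longrightarrow> V i \<subseteq> V j" using assms unfolding iso_flags_def by blast
qed

lemma direct_sumD:
  assumes "direct_sum_eq m A B"
  shows "\<And>x. x \<in> Rn m \<Longrightarrow> \<exists>a\<in>A. \<exists>b\<in>B. x = (\<lambda>k. a k + b k)"
    "\<And>x. x \<in> A \<Longrightarrow> x \<in> B \<Longrightarrow> x = (\<lambda>k. 0)"
  using assms unfolding direct_sum_eq_def vadd_def vzero_def by (auto simp: set_eq_iff) blast+

lemma Cset_tau: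
  assumes "V \<in> Cset n \<Theta> (tau \<Theta>)" "i \<in> \<Theta>" "\<Theta> \<subseteq> {1..n}"
  shows "direct_sum_eq (2*n) (V i) (vS {1..2*n-i})"
proof -
  have "i \<le> n" using assms by auto
  have "direct_sum_eq (2*n) (V i) (omega_perp n (tau \<Theta> i))"
    using assms unfolding Cset_def antipodal_def by blast
  then show ?thesis unfolding tau_vS[OF assms(2)] omega_perp_tau[OF \<open>i \<le> n\<close>] .
qed

lemma Cset_tau_opp:
  assumes "V \<in> Cset n \<Theta> (tau_opp n \<Theta>)" "i \<in> \<Theta>" "\<Theta> \<subseteq> {1..n}"
  shows "direct_sum_eq (2*n) (V i) (vS {i+1..2*n})"
proof -
  have "i \<le> n" using assms by auto
  have "direct_sum_eq (2*n) (V i) (omega_perp n (tau_opp n \<Theta> i))"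
    using assms unfolding Cset_def antipodal_def by blast
  then show ?thesis unfolding tau_opp_vS[OF assms(2)] omega_perp_tau_opp[OF \<open>i \<le> n\<close>] .
qed

section \<open>Triangular systems\<close>

lemma tri_solve:
  assumes "q \<le> n" "\<And>b. b \<in> {2*n+1-q..2*n} \<Longrightarrow> fb b \<in> vS {1..b} \<and> fb b b = 1"
  shows "\<exists>z\<in>vS {1..q}. \<forall>b\<in>{2*n+1-q..2*n}. omega n z (fb b) = r b"
  using assms
proof (induction q arbitrary: r)
  case 0
  show ?case by (rule bexI[of _ "\<lambda>k. 0"]) (auto simp: vS_def)
next
  case (Suc q)
  define b0 where "b0 = 2*n - q"
  have b0: "b0 \<in> {2*n+1-Suc q..2*n}" "1 \<le> b0" using Suc.prems(1) by (auto simp: b0_def)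
  have fb0: "fb b0 \<in> vS {1..b0}" "fb b0 b0 = 1" using Suc.prems(2)[OF b0(1)] by auto
  have qin: "Suc q \<in> {1..2*n}" using Suc.prems(1) by auto
  have cdef: "omega n (ev (Suc q)) (fb b0) = (-1)^(2*n+1-Suc q)"
    using omega_ev_left[OF qin] fb0 by (simp add: b0_def)
  define t where "t = r b0 / (-1)^(2*n+1-Suc q)"
  define r' where "r' b = r b - t * omega n (ev (Suc q)) (fb b)" for b
  have "\<exists>z\<in>vS {1..q}. \<forall>b\<in>{2*n+1-q..2*n}. omega n z (fb b) = r' b"
    by (rule Suc.IH) (use Suc.prems in auto)
  then obtain z0 where z0: "z0 \<in> vS {1..q}" "\<forall>b\<in>{2*n+1-q..2*n}. omega n z0 (fb b) = r' b"
    by blast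
  define z where "z = (\<lambda>k. z0 k + t * ev (Suc q) k)"
  have zS: "z \<in> vS {1..Suc q}" using z0(1) by (auto simp: z_def vS_def ev_def)
  have oz: "omega n z (fb b) = omega n z0 (fb b) + t * omega n (ev (Suc q)) (fb b)" for b
    unfolding z_def by (simp add: omega_add_left omega_scale_left)
  have z00: "omega n z0 (fb b0) = 0"
    by (rule omega_vanish[OF z0(1) fb0(1)]) (auto simp: b0_def)
  show ?case
  proof (rule bexI[OF _ zS], rule ballI)
    fix b assume b: "b \<in> {2*n+1-Suc q..2*n}"
    show "omega n z (fb b) = r b"
    proof (cases "b = b0")
      case True then show ?thesis using oz[of b0] z00 cdef by (simp add: t_def)
    next
      case False
      then have "b \<in> {2*n+1-q..2*n}" using b by (auto simp: b0_def)
      then show ?thesis using oz[of b] z0(2) by (simp add: r'_def)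
    qed
  qed
qed

lemma tri_unique:
  assumes "q \<le> n" "\<And>b. b \<in> {2*n+1-q..2*n} \<Longrightarrow> fb b \<in> vS {1..b} \<and> fb b b = 1"
    "z \<in> vS {1..q}" "\<forall>b\<in>{2*n+1-q..2*n}. omega n z (fb b) = 0"
  shows "z = (\<lambda>k. 0)"
  using assms
proof (induction q arbitrary: z)
  case 0 then show ?case by (auto simp: vS_def)
next
  case (Suc q)
  define b0 where "b0 = 2*n - q"
  have b0: "b0 \<in> {2*n+1-Suc q..2*n}" using Suc.prems(1) by (auto simp: b0_def)
  have fb0: "fb b0 \<in> vS {1..b0}" "fb b0 b0 = 1" using Suc.prems(2)[OF b0] by auto
  define z0 where "z0 = (\<lambda>k. if k = Suc q then 0 else z k)"
  have z0S: "z0 \<in> vS {1..q}" using Suc.prems(3) by (auto simp: z0_def vS_def)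
  have zeq: "z = (\<lambda>k. z0 k + z (Suc q) * ev (Suc q) k)" by (auto simp: z0_def ev_def)
  have qin: "Suc q \<in> {1..2*n}" using Suc.prems(1) by auto
  have cdef: "omega n (ev (Suc q)) (fb b0) = (-1)^(2*n+1-Suc q)"
    using omega_ev_left[OF qin] fb0 by (simp add: b0_def)
  have z00: "omega n z0 (fb b0) = 0"
    by (rule omega_vanish[OF z0S fb0(1)]) (auto simp: b0_def)
  have oz: "omega n z (fb b) = omega n z0 (fb b) + z (Suc q) * omega n (ev (Suc q)) (fb b)" for b
    by (subst zeq) (simp add: omega_add_left omega_scale_left)
  have "omega n z (fb b0) = 0" using Suc.prems(4) b0 by auto
  then have zq: "z (Suc q) = 0" using oz[of b0] z00 cdef by simp
  have "z0 = (\<lambda>k. 0)"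
  proof (rule Suc.IH)
    show "\<forall>b\<in>{2*n+1-q..2*n}. omega n z0 (fb b) = 0"
      using Suc.prems(4) oz zq by auto
  qed (use Suc.prems z0S in auto)
  then show ?case using zeq zq by simp
qed


lemma span_fill:
  assumes q: "q \<le> 2*n"
    and ucol: "\<And>c. c \<in> {1..2*n} \<Longrightarrow> (\<lambda>k. u k c) \<in> vS {1..c} \<and> u c c = 1"
  shows "p \<le> 2*n \<Longrightarrow> x \<in> vS {1..p} \<Longrightarrow> \<exists>w\<in>vS {q+1..2*n}. (\<lambda>k. x k - mvec (2*n) u w k) \<in> vS {1..q}"
proof (induction p arbitrary: x)
  case 0
  then have "x = (\<lambda>k. 0)" by (auto simp: vS_def)
  then show ?case by (intro bexI[of _ "\<lambda>k. 0"]) (auto simp: vS_def mvec_zero)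
next
  case (Suc p)
  show ?case
  proof (cases "Suc p \<le> q")
    case True
    then have "x \<in> vS {1..q}" using Suc.prems vS_mono[of "{1..Suc p}" "{1..q}"] by auto
    then show ?thesis by (intro bexI[of _ "\<lambda>k. 0"]) (auto simp: vS_def mvec_zero)
  next
    case False
    have c: "Suc p \<in> {1..2*n}" using Suc.prems by auto
    note uc = ucol[OF c]
    define x' where "x' = (\<lambda>k. x k - x (Suc p) * u k (Suc p))"
    have x': "x' \<in> vS {1..p}" unfolding vS_iff
    proof (intro allI impI)
      fix k assume k: "k \<notin> {1..p}"
      show "x' k = 0"
      proof (cases "k = Suc p")
        case True then show ?thesis using uc by (simp add: x'_def)
      next
        case False
        then have "k \<notin> {1..Suc p}" using k by auto
        then show ?thesis using Suc.prems(2) uc unfolding x'_def vS_def by auto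
      qed
    qed
    obtain w' where w': "w' \<in> vS {q+1..2*n}" "(\<lambda>k. x' k - mvec (2*n) u w' k) \<in> vS {1..q}"
      using Suc.IH[OF _ x'] Suc.prems by auto
    define w where "w = (\<lambda>k. w' k + x (Suc p) * ev (Suc p) k)"
    have wS: "w \<in> vS {q+1..2*n}" using w' False c by (auto simp: w_def vS_def ev_def)
    have "mvec (2*n) u w = (\<lambda>i. mvec (2*n) u w' i + x (Suc p) * u i (Suc p))"
      unfolding w_def by (rule mvec_add_ev[OF c])
    then have "(\<lambda>k. x k - mvec (2*n) u w k) = (\<lambda>k. x' k - mvec (2*n) u w' k)"
      by (auto simp: x'_def)
    then have "(\<lambda>k. x k - mvec (2*n) u w k) \<in> vS {1..q}" using w'(2) by simp
    then show ?thesis using wS by blast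
  qed
qed

definition fvec :: "nat \<Rightarrow> nat set \<Rightarrow> flag \<Rightarrow> nat \<Rightarrow> vect" where
  "fvec n \<Theta> V c = (SOME y. y \<in> V (2*n - predF n \<Theta> c) \<and> (\<lambda>k. y k - ev c k) \<in> vS {1..predF n \<Theta> c})"

definition yvec :: "nat \<Rightarrow> nat set \<Rightarrow> flag \<Rightarrow> nat \<Rightarrow> vect" where
  "yvec n \<Theta> V c = (SOME y. (\<lambda>k. y k - ev c k) \<in> vS {1..predF n \<Theta> c} \<and>
      (\<forall>b\<in>{2*n - Max \<Theta> + 1..2*n}. omega n y (fvec n \<Theta> V b) = omega n (ev c) (ev b)))"

definition uV :: "nat \<Rightarrow> nat set \<Rightarrow> flag \<Rightarrow> matr" where
  "uV n \<Theta> V = (\<lambda>i c. if i \<in> {1..2*n} \<and> c \<in> {1..2*n} then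
      (if 2*n - Max \<Theta> < c then fvec n \<Theta> V c i else yvec n \<Theta> V c i) else 0)"

context
  fixes n :: nat and \<Theta> :: "nat set" and V :: flag
  assumes Th: "\<Theta> \<subseteq> {1..n}" and Tne: "\<Theta> \<noteq> {}" and VC: "V \<in> Cset n \<Theta> (tau \<Theta>)"
begin

abbreviation "tm \<equiv> Max \<Theta>"
abbreviation "pr \<equiv> predF n \<Theta>"

lemma VI: "V \<in> iso_flags n \<Theta>" using VC unfolding Cset_def by auto

lemma tm_props: "tm \<in> \<Theta>" "1 \<le> tm" "tm \<le> n" "\<And>t. t \<in> \<Theta> \<Longrightarrow> t \<le> tm"
proof -
  have fin: "finite \<Theta>" using Theta_finite[OF Th] .
  show "tm \<in> \<Theta>" using Max_in[OF fin Tne] .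
  then show "1 \<le> tm" "tm \<le> n" using Th by auto
  show "\<And>t. t \<in> \<Theta> \<Longrightarrow> t \<le> tm" using Max_ge[OF fin] by auto
qed

lemma filt_cases: "x \<in> filt_idx n \<Theta> \<Longrightarrow> x = 0 \<or> x = 2*n \<or> x \<in> \<Theta> \<or> (\<exists>t\<in>\<Theta>. x = 2*n - t)"
  unfolding filt_idx_def by auto

lemma filt_tm: "2*n - tm \<in> filt_idx n \<Theta>"
  using tm_props(1) unfolding filt_idx_def by auto

lemma filt_opp: "t \<in> \<Theta> \<Longrightarrow> 2*n - t \<in> filt_idx n \<Theta>"
  unfolding filt_idx_def by auto

lemma B_pred:
  assumes "c \<in> {2*n - tm + 1..2*n}"
  shows "2*n - pr c \<in> \<Theta>" "2*n - tm \<le> pr c" "pr c < c" "pr c \<in> filt_idx n \<Theta>"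
proof -
  have c1: "1 \<le> c" using assms by auto
  note P = predF_props[OF Th c1]
  show ge: "2*n - tm \<le> pr c" using P(3)[OF filt_tm] assms by auto
  show "pr c < c" "pr c \<in> filt_idx n \<Theta>" using P by auto
  have "pr c = 0 \<or> pr c = 2*n \<or> pr c \<in> \<Theta> \<or> (\<exists>t\<in>\<Theta>. pr c = 2*n - t)"
    using filt_cases[OF P(1)] .
  then show "2*n - pr c \<in> \<Theta>"
  proof (elim disjE)
    assume "pr c = 0" then show ?thesis using ge tm_props by auto
  next
    assume "pr c = 2*n" then show ?thesis using P(2) assms by auto
  next
    assume h: "pr c \<in> \<Theta>"
    then have "pr c \<le> tm" using tm_props by auto
    have "pr c \<le> n" using h Th by auto
    then have "pr c = n" "tm = n" using ge tm_props(3) \<open>pr c \<le> tm\<close> by linarith+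
    then show ?thesis using tm_props by auto
  next
    assume "\<exists>t\<in>\<Theta>. pr c = 2*n - t"
    then obtain t where t: "t \<in> \<Theta>" "pr c = 2*n - t" by auto
    then have "t \<le> 2*n" using Th by auto
    then show ?thesis using t by auto
  qed
qed

lemma small_pred:
  assumes "c \<in> {1..2*n - tm}"
  shows "pr c \<le> tm"
proof -
  have c1: "1 \<le> c" using assms by auto
  note P = predF_props[OF Th c1]
  have "pr c = 0 \<or> pr c = 2*n \<or> pr c \<in> \<Theta> \<or> (\<exists>t\<in>\<Theta>. pr c = 2*n - t)"
    using filt_cases[OF P(1)] .
  then show ?thesis
  proof (elim disjE)
    assume "pr c = 2*n" then show ?thesis using P(2) assms by auto
  next
    assume "\<exists>t\<in>\<Theta>. pr c = 2*n - t"
    then obtain t where t: "t \<in> \<Theta>" "pr c = 2*n - t" by auto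
    have "t \<le> tm" using t tm_props by auto
    then show ?thesis using t P(2) assms by auto
  qed (use tm_props in auto)
qed

lemma fvec_props:
  assumes "c \<in> {2*n - tm + 1..2*n}"
  shows "fvec n \<Theta> V c \<in> V (2*n - pr c)" "(\<lambda>k. fvec n \<Theta> V c k - ev c k) \<in> vS {1..pr c}"
proof -
  let ?t = "2*n - pr c"
  note BP = B_pred[OF assms]
  have pc: "pr c \<le> 2*n" using BP assms by auto
  have ds: "direct_sum_eq (2*n) (V ?t) (vS {1..2*n - ?t})" using Cset_tau[OF VC BP(1) Th] .
  have eq: "2*n - ?t = pr c" using pc by auto
  have "ev c \<in> Rn (2*n)" using assms by (auto simp: Rn_vS intro: ev_vS)
  then obtain a b where ab: "a \<in> V ?t" "b \<in> vS {1..pr c}" "ev c = (\<lambda>k. a k + b k)"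
    using direct_sumD(1)[OF ds] eq by metis
  have "(\<lambda>k. a k - ev c k) \<in> vS {1..pr c}" using ab(2) unfolding ab(3) by (auto simp: vS_def)
  then have "\<exists>y. y \<in> V ?t \<and> (\<lambda>k. y k - ev c k) \<in> vS {1..pr c}" using ab(1) by blast
  then have "fvec n \<Theta> V c \<in> V ?t \<and> (\<lambda>k. fvec n \<Theta> V c k - ev c k) \<in> vS {1..pr c}"
    unfolding fvec_def by (rule someI_ex)
  then show "fvec n \<Theta> V c \<in> V (2*n - pr c)" "(\<lambda>k. fvec n \<Theta> V c k - ev c k) \<in> vS {1..pr c}" by auto
qed

lemma fvec_tri:
  assumes "c \<in> {2*n - tm + 1..2*n}"
  shows "fvec n \<Theta> V c \<in> vS {1..c}" "fvec n \<Theta> V c c = 1"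
proof -
  note F = fvec_props(2)[OF assms]
  have pc: "pr c < c" using B_pred[OF assms] by auto
  have F': "fvec n \<Theta> V c k = ev c k" if "k \<notin> {1..pr c}" for k
    using F that unfolding vS_def by auto
  show "fvec n \<Theta> V c \<in> vS {1..c}" unfolding vS_iff
  proof (intro allI impI)
    fix k assume k: "k \<notin> {1..c}"
    then have "k \<notin> {1..pr c}" using pc by auto
    then show "fvec n \<Theta> V c k = 0" using F'[of k] k assms by (auto simp: ev_def)
  qed
  show "fvec n \<Theta> V c c = 1" using F'[of c] pc by (simp add: ev_def)
qed

lemma fvec_Vtm:
  assumes "c \<in> {2*n - tm + 1..2*n}"
  shows "fvec n \<Theta> V c \<in> V tm"
proof -
  note BP = B_pred[OF assms]
  have "V (2*n - pr c) \<subseteq> V tm"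
    using iso_flagsD(4)[OF VI BP(1) tm_props(1)] tm_props(4)[OF BP(1)] by auto
  then show ?thesis using fvec_props(1)[OF assms] by auto
qed

lemma fvec_Vi:
  assumes "i \<in> \<Theta>" "c \<in> {2*n - i + 1..2*n}"
  shows "fvec n \<Theta> V c \<in> V i"
proof -
  have itm: "i \<le> tm" using tm_props assms by auto
  then have cB: "c \<in> {2*n - tm + 1..2*n}" using assms by auto
  note BP = B_pred[OF cB]
  have "2*n - i \<le> pr c" using predF_props(3)[OF Th _ filt_opp[OF assms(1)]] assms by auto
  then have "2*n - pr c \<le> i" using assms Th by auto
  then have "V (2*n - pr c) \<subseteq> V i"
    using iso_flagsD(4)[OF VI BP(1) assms(1)] by auto
  then show ?thesis using fvec_props(1)[OF cB] by auto
qed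

lemma fvec_offdiag:
  assumes c: "c \<in> {1..2*n - tm}" and b: "b \<in> {2*n - tm + 1..2*n}" and bq: "b \<le> 2*n - pr c"
  shows "fvec n \<Theta> V b (2*n+1-c) = ev b (2*n+1-c)"
proof -
  have c1: "1 \<le> c" using c by auto
  note Pc = predF_props[OF Th c1]
  note BP = B_pred[OF b]
  have "pr b < 2*n+1-c"
  proof (rule ccontr)
    assume "\<not> pr b < 2*n+1-c"
    then have x: "2*n+1-c \<le> pr b" by simp
    have xF: "2*n - pr b \<in> filt_idx n \<Theta>" using filt_sym[OF Th BP(4)] .
    have "2*n - pr b < c" using x c by auto
    then have "2*n - pr b \<le> pr c" using Pc(3)[OF xF] by auto
    moreover have "pr b < 2*n - pr c" using BP(3) bq by auto
    ultimately show False by auto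
  qed
  then have "2*n+1-c \<notin> {1..pr b}" by auto
  then show ?thesis using fvec_props(2)[OF b] unfolding vS_def by auto
qed

lemma yvec_props:
  assumes c: "c \<in> {1..2*n - tm}"
  shows "(\<lambda>k. yvec n \<Theta> V c k - ev c k) \<in> vS {1..pr c}"
    "\<And>b. b \<in> {2*n - tm + 1..2*n} \<Longrightarrow> omega n (yvec n \<Theta> V c) (fvec n \<Theta> V b) = omega n (ev c) (ev b)"
proof -
  let ?q = "pr c"
  have qtm: "?q \<le> tm" using small_pred[OF c] .
  have qn: "?q \<le> n" using qtm tm_props by auto
  have cin: "c \<in> {1..2*n}" using c by auto
  have fbp: "\<And>b. b \<in> {2*n+1-?q..2*n} \<Longrightarrow> fvec n \<Theta> V b \<in> vS {1..b} \<and> fvec n \<Theta> V b b = 1"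
  proof -
    fix b assume "b \<in> {2*n+1-?q..2*n}"
    then have "b \<in> {2*n - tm + 1..2*n}" using qtm tm_props(3) by auto
    then show "fvec n \<Theta> V b \<in> vS {1..b} \<and> fvec n \<Theta> V b b = 1" using fvec_tri by auto
  qed
  obtain z where z: "z \<in> vS {1..?q}"
    "\<forall>b\<in>{2*n+1-?q..2*n}. omega n z (fvec n \<Theta> V b) = omega n (ev c) (ev b) - omega n (ev c) (fvec n \<Theta> V b)"
  proof -
    have "\<exists>z\<in>vS {1..?q}. \<forall>b\<in>{2*n+1-?q..2*n}. omega n z (fvec n \<Theta> V b) =
        (\<lambda>b. omega n (ev c) (ev b) - omega n (ev c) (fvec n \<Theta> V b)) b"
      by (rule tri_solve[OF qn, where fb="fvec n \<Theta> V"]) (rule fbp)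
    then show ?thesis using that by auto
  qed
  define y where "y = (\<lambda>k. ev c k + z k)"
  have y1: "(\<lambda>k. y k - ev c k) \<in> vS {1..?q}" using z(1) by (simp add: y_def)
  have y2: "omega n y (fvec n \<Theta> V b) = omega n (ev c) (ev b)" if b: "b \<in> {2*n - tm + 1..2*n}" for b
  proof -
    have oy: "omega n y (fvec n \<Theta> V b) = omega n (ev c) (fvec n \<Theta> V b) + omega n z (fvec n \<Theta> V b)"
      unfolding y_def by (rule omega_add_left)
    show ?thesis
    proof (cases "b \<in> {2*n+1-?q..2*n}")
      case True then show ?thesis using oy z(2) by auto
    next
      case False
      then have bq: "b \<le> 2*n - ?q" using b by auto
      have "omega n z (fvec n \<Theta> V b) = 0"
        by (rule omega_vanish[OF z(1) fvec_tri(1)[OF b]]) (use bq in auto)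
      moreover have "omega n (ev c) (fvec n \<Theta> V b) = omega n (ev c) (ev b)"
        using fvec_offdiag[OF c b bq] by (simp add: omega_ev_left[OF cin])
      ultimately show ?thesis using oy by simp
    qed
  qed
  have "\<exists>y. (\<lambda>k. y k - ev c k) \<in> vS {1..?q} \<and>
      (\<forall>b\<in>{2*n - tm + 1..2*n}. omega n y (fvec n \<Theta> V b) = omega n (ev c) (ev b))"
    using y1 y2 by blast
  then have "(\<lambda>k. yvec n \<Theta> V c k - ev c k) \<in> vS {1..?q} \<and>
      (\<forall>b\<in>{2*n - tm + 1..2*n}. omega n (yvec n \<Theta> V c) (fvec n \<Theta> V b) = omega n (ev c) (ev b))"
    unfolding yvec_def by (rule someI_ex)
  then show "(\<lambda>k. yvec n \<Theta> V c k - ev c k) \<in> vS {1..pr c}"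
    "\<And>b. b \<in> {2*n - tm + 1..2*n} \<Longrightarrow> omega n (yvec n \<Theta> V c) (fvec n \<Theta> V b) = omega n (ev c) (ev b)"
    by auto
qed

end


context
  fixes n :: nat and \<Theta> :: "nat set" and V :: flag
  assumes Th: "\<Theta> \<subseteq> {1..n}" and Tne: "\<Theta> \<noteq> {}" and VC: "V \<in> Cset n \<Theta> (tau \<Theta>)"
begin

abbreviation "tm' \<equiv> Max \<Theta>"
abbreviation "pr' \<equiv> predF n \<Theta>"
abbreviation "uX \<equiv> uV n \<Theta> V"

lemmas TP = tm_props[OF Th Tne VC]

lemma yvec_tri:
  assumes "c \<in> {1..2*n - tm'}"
  shows "yvec n \<Theta> V c \<in> vS {1..c}" "yvec n \<Theta> V c c = 1"
proof -
  note F = yvec_props(1)[OF Th Tne VC assms]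
  have pc: "pr' c < c" using predF_props[OF Th, of c] assms by auto
  have F': "yvec n \<Theta> V c k = ev c k" if "k \<notin> {1..pr' c}" for k
    using F that unfolding vS_def by auto
  show "yvec n \<Theta> V c \<in> vS {1..c}" unfolding vS_iff
  proof (intro allI impI)
    fix k assume k: "k \<notin> {1..c}"
    then have "k \<notin> {1..pr' c}" using pc by auto
    then show "yvec n \<Theta> V c k = 0" using F'[of k] k assms by (auto simp: ev_def)
  qed
  show "yvec n \<Theta> V c c = 1" using F'[of c] pc by (simp add: ev_def)
qed

lemma u_col:
  assumes "c \<in> {1..2*n}"
  shows "(\<lambda>i. uX i c) = (if 2*n - tm' < c then fvec n \<Theta> V c else yvec n \<Theta> V c)"
proof (cases "2*n - tm' < c")
  case True
  then have cB: "c \<in> {2*n - tm' + 1..2*n}" using assms by auto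
  have "fvec n \<Theta> V c \<in> vS {1..2*n}"
    using fvec_tri(1)[OF Th Tne VC cB] vS_mono[of "{1..c}" "{1..2*n}"] assms by auto
  then show ?thesis using True assms unfolding uV_def by (auto simp: vS_def)
next
  case False
  then have cB: "c \<in> {1..2*n - tm'}" using assms by auto
  have "yvec n \<Theta> V c \<in> vS {1..2*n}"
    using yvec_tri(1)[OF cB] vS_mono[of "{1..c}" "{1..2*n}"] assms by auto
  then show ?thesis using False assms unfolding uV_def by (auto simp: vS_def)
qed

lemma u_Mats: "uX \<in> Mats (2*n)"
  unfolding Mats_def uV_def by auto

lemma u_colprop: "colprop n \<Theta> uX"
  unfolding colprop_def
proof (intro ballI allI impI)
  fix c i assume c: "c \<in> {1..2*n}" and i: "i \<notin> {1..pr' c}"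
  have "uX i c = (if 2*n - tm' < c then fvec n \<Theta> V c i else yvec n \<Theta> V c i)"
    using fun_cong[OF u_col[OF c], of i] by (simp split: if_splits)
  also have "\<dots> = ev c i"
  proof (cases "2*n - tm' < c")
    case True
    then have cB: "c \<in> {2*n - tm' + 1..2*n}" using c by auto
    then show ?thesis using True fvec_props(2)[OF Th Tne VC cB] i unfolding vS_def by auto
  next
    case False
    then have cB: "c \<in> {1..2*n - tm'}" using c by auto
    then show ?thesis using False yvec_props(1)[OF Th Tne VC cB] i unfolding vS_def by auto
  qed
  finally show "uX i c = (if i = c then 1 else 0)" by (simp add: ev_def)
qed

lemma u_Sp: "uX \<in> Sp n"
  unfolding Sp_iff[OF u_Mats]
proof (intro ballI)
  have main: "omega n (\<lambda>a. uX a i) (\<lambda>a. uX a j) = omega n (ev i) (ev j)"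
    if i: "i \<in> {1..2*n}" and j: "j \<in> {1..2*n}" and ij: "\<not> (2*n - tm' < i \<and> 2*n - tm' \<ge> j)" for i j
  proof (cases "2*n - tm' < i")
    case iB: True
    then have jB: "2*n - tm' < j" using ij by auto
    have iB': "i \<in> {2*n - tm' + 1..2*n}" and jB': "j \<in> {2*n - tm' + 1..2*n}" using i j iB jB by auto
    have "omega n (\<lambda>a. uX a i) (\<lambda>a. uX a j) = omega n (fvec n \<Theta> V i) (fvec n \<Theta> V j)"
      using u_col[OF i] u_col[OF j] iB jB by simp
    also have "\<dots> = 0"
      using iso_flagsD(3)[OF VI[OF Th Tne VC] TP(1)] fvec_Vtm[OF Th Tne VC iB'] fvec_Vtm[OF Th Tne VC jB']
      unfolding isotropic_def by blast
    also have "\<dots> = omega n (ev i) (ev j)"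
      using omega_ev_left[OF i] iB jB TP(3) by (auto simp: ev_def)
    finally show ?thesis .
  next
    case iS: False
    have iS': "i \<in> {1..2*n - tm'}" using i iS by auto
    define zi where "zi = (\<lambda>k. yvec n \<Theta> V i k - ev i k)"
    have zi: "zi \<in> vS {1..tm'}"
      using yvec_props(1)[OF Th Tne VC iS'] small_pred[OF Th Tne VC iS'] vS_mono[of "{1..pr' i}" "{1..tm'}"]
      unfolding zi_def by auto
    have coli: "(\<lambda>a. uX a i) = (\<lambda>k. ev i k + zi k)"
      using u_col[OF i] iS by (auto simp: zi_def)
    show ?thesis
    proof (cases "2*n - tm' < j")
      case jB: True
      have jB': "j \<in> {2*n - tm' + 1..2*n}" using j jB by auto
      show ?thesis using u_col[OF i] u_col[OF j] iS jB yvec_props(2)[OF Th Tne VC iS' jB'] by simp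
    next
      case jS: False
      have jS': "j \<in> {1..2*n - tm'}" using j jS by auto
      define zj where "zj = (\<lambda>k. yvec n \<Theta> V j k - ev j k)"
      have zj: "zj \<in> vS {1..tm'}"
        using yvec_props(1)[OF Th Tne VC jS'] small_pred[OF Th Tne VC jS'] vS_mono[of "{1..pr' j}" "{1..tm'}"]
        unfolding zj_def by auto
      have colj: "(\<lambda>a. uX a j) = (\<lambda>k. ev j k + zj k)"
        using u_col[OF j] jS by (auto simp: zj_def)
      have e1: "omega n (ev i) zj = 0"
        by (rule omega_vanish[OF ev_vS[of i "{i}"] zj]) (use iS TP(3) in auto)
      have e2: "omega n zi (ev j) = 0"
        by (rule omega_vanish[OF zi ev_vS[of j "{j}"]]) (use jS TP(3) in auto)
      have e3: "omega n zi zj = 0"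
        by (rule omega_vanish[OF zi zj]) (use TP(3) in auto)
      show ?thesis unfolding coli colj omega_add_left omega_add_right
        by (simp only: e1 e2 e3)
    qed
  qed
  fix i j assume i: "i \<in> {1..2*n}" and j: "j \<in> {1..2*n}"
  show "omega n (\<lambda>a. uX a i) (\<lambda>a. uX a j) = omega n (ev i) (ev j)"
  proof (cases "2*n - tm' < i \<and> 2*n - tm' \<ge> j")
    case True
    then have "omega n (\<lambda>a. uX a j) (\<lambda>a. uX a i) = omega n (ev j) (ev i)"
      using main[OF j i] by auto
    then show ?thesis using omega_antisym[of n "\<lambda>a. uX a i"] omega_antisym[of n "ev i"] by simp
  next
    case False then show ?thesis using main[OF i j] by simp
  qed
qed

lemma u_act: "act n uX (tau_opp n \<Theta>) = V"
proof
  fix i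
  show "act n uX (tau_opp n \<Theta>) i = V i"
  proof (cases "i \<in> \<Theta>")
    case False
    then show ?thesis using VI[OF Th Tne VC] unfolding act_def tau_opp_def iso_flags_def by auto
  next
    case True
    have itm: "i \<le> tm'" using TP(4)[OF True] .
    have iin: "i \<le> n" using True Th by auto
    have sub: "mvec (2*n) uX w \<in> V i" if w: "w \<in> vS {2*n-i+1..2*n}" for w
    proof -
      have "mvec (2*n) uX w = (\<lambda>a. \<Sum>c\<in>{2*n-i+1..2*n}. w c * uX a c)"
        by (rule mvec_vS[OF w]) auto
      also have "\<dots> = (\<lambda>a. \<Sum>c\<in>{2*n-i+1..2*n}. w c * fvec n \<Theta> V c a)"
      proof (rule ext, rule sum.cong)
        fix a c assume c: "c \<in> {2*n-i+1..2*n}"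
        then have "2*n - tm' < c" "c \<in> {1..2*n}" using itm by auto
        then show "w c * uX a c = w c * fvec n \<Theta> V c a" using fun_cong[OF u_col, of c a] by auto
      qed simp
      also have "\<dots> \<in> V i"
        by (rule lsub_sum[OF iso_flagsD(1)[OF VI[OF Th Tne VC] True]]) (use fvec_Vi[OF Th Tne VC True] in auto)
      finally show ?thesis .
    qed
    have "mvec (2*n) uX ` vS {2*n-i+1..2*n} = V i"
    proof
      show "mvec (2*n) uX ` vS {2*n-i+1..2*n} \<subseteq> V i" using sub by auto
      show "V i \<subseteq> mvec (2*n) uX ` vS {2*n-i+1..2*n}"
      proof
        fix x assume x: "x \<in> V i"
        have xS: "x \<in> vS {1..2*n}" using iso_flagsD(2)[OF VI[OF Th Tne VC] True] x by auto
        have ucol: "(\<lambda>k. uX k c) \<in> vS {1..c} \<and> uX c c = 1" if "c \<in> {1..2*n}" for c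
        proof
          show "uX c c = 1" using colprop_diag[OF Th u_colprop that] .
          show "(\<lambda>k. uX k c) \<in> vS {1..c}" unfolding vS_iff
          proof (intro allI impI)
            fix k assume k: "k \<notin> {1..c}"
            show "uX k c = 0"
            proof (cases "c < k")
              case True then show ?thesis using colprop_low[OF Th u_colprop that] by simp
            next
              case False then have "k \<notin> {1..2*n}" using k that by auto
              then show ?thesis using u_Mats unfolding Mats_def by auto
            qed
          qed
        qed
        obtain w where w: "w \<in> vS {2*n-i+1..2*n}" "(\<lambda>k. x k - mvec (2*n) uX w k) \<in> vS {1..2*n-i}"
          using span_fill[of "2*n-i" n uX "2*n" x] ucol xS by (auto simp: Suc_diff_le)
        have r: "(\<lambda>k. x k - mvec (2*n) uX w k) \<in> V i"
          by (rule lsub_diff[OF iso_flagsD(1)[OF VI[OF Th Tne VC] True] x sub[OF w(1)]])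
        have "(\<lambda>k. x k - mvec (2*n) uX w k) = (\<lambda>k. 0)"
          using direct_sumD(2)[OF Cset_tau[OF VC True Th] r w(2)] .
        then have "x = mvec (2*n) uX w" by (auto simp: fun_eq_iff)
        then show "x \<in> mvec (2*n) uX ` vS {2*n-i+1..2*n}" using w(1) by auto
      qed
    qed
    then show ?thesis unfolding act_def tau_opp_vS[OF True] .
  qed
qed

end


lemma colprop_tri:
  assumes Th: "\<Theta> \<subseteq> {1..n}" and cp: "colprop n \<Theta> g" and gM: "g \<in> Mats (2*n)" and c: "c \<in> {1..2*n}"
  shows "(\<lambda>k. g k c) \<in> vS {1..c}" "g c c = 1"
proof -
  show "g c c = 1" using colprop_diag[OF Th cp c] .
  show "(\<lambda>k. g k c) \<in> vS {1..c}" unfolding vS_iff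
  proof (intro allI impI)
    fix k assume k: "k \<notin> {1..c}"
    show "g k c = 0"
    proof (cases "c < k")
      case True then show ?thesis using colprop_low[OF Th cp c] by simp
    next
      case False then have "k \<notin> {1..2*n}" using k c by auto
      then show ?thesis using gM unfolding Mats_def by auto
    qed
  qed
qed

lemma U_unique:
  assumes Th: "\<Theta> \<subseteq> {1..n}" and Tne: "\<Theta> \<noteq> {}" and VC: "V \<in> Cset n \<Theta> (tau \<Theta>)"
    and u1: "u1 \<in> U_Theta n \<Theta>" "act n u1 (tau_opp n \<Theta>) = V"
    and u2: "u2 \<in> U_Theta n \<Theta>" "act n u2 (tau_opp n \<Theta>) = V"
  shows "u1 = u2"
proof -
  let ?tm = "Max \<Theta>" and ?pr = "predF n \<Theta>"
  note TP = tm_props[OF Th Tne VC]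
  have M1: "u1 \<in> Mats (2*n)" and S1: "u1 \<in> Sp n" using u1 unfolding U_Theta_def Sp_def by auto
  have M2: "u2 \<in> Mats (2*n)" and S2: "u2 \<in> Sp n" using u2 unfolding U_Theta_def Sp_def by auto
  have C1: "colprop n \<Theta> u1" using U_colprop[OF Th u1(1)] .
  have C2: "colprop n \<Theta> u2" using U_colprop[OF Th u2(1)] .
  have colB: "(\<lambda>k. u1 k c) = (\<lambda>k. u2 k c)" if cB: "c \<in> {2*n - ?tm + 1..2*n}" for c
  proof -
    note BP = B_pred[OF Th Tne VC cB]
    let ?t = "2*n - ?pr c"
    have cin: "c \<in> {1..2*n}" using cB by auto
    have pc: "?pr c \<le> 2*n" using BP cB by auto
    have ec: "ev c \<in> tau_opp n \<Theta> ?t"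
      unfolding tau_opp_vS[OF BP(1)] using BP(3) cB pc by (intro ev_vS) auto
    have inV: "(\<lambda>k. g k c) \<in> V ?t" if "act n g (tau_opp n \<Theta>) = V" for g
    proof -
      have "mvec (2*n) g (ev c) \<in> act n g (tau_opp n \<Theta>) ?t" unfolding act_def using ec by auto
      then show ?thesis using that mvec_ev[OF cin] by simp
    qed
    have "(\<lambda>k. (u1 k c - ev c k) - (u2 k c - ev c k)) \<in> vS {1..?pr c}"
      by (rule lsub_diff[OF lsub_vS colprop_col[OF Th C1 cin] colprop_col[OF Th C2 cin]])
    then have d1: "(\<lambda>k. u1 k c - u2 k c) \<in> vS {1..2*n - ?t}" using pc by simp
    have d2: "(\<lambda>k. u1 k c - u2 k c) \<in> V ?t"
      by (rule lsub_diff[OF iso_flagsD(1)[OF VI[OF Th Tne VC] BP(1)] inV[OF u1(2)] inV[OF u2(2)]])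
    have "(\<lambda>k. u1 k c - u2 k c) = (\<lambda>k. 0)"
      using direct_sumD(2)[OF Cset_tau[OF VC BP(1) Th] d2 d1] .
    then show ?thesis by (auto simp: fun_eq_iff)
  qed
  have colS: "(\<lambda>k. u1 k c) = (\<lambda>k. u2 k c)" if cS: "c \<in> {1..2*n - ?tm}" for c
  proof -
    have cin: "c \<in> {1..2*n}" using cS by auto
    have pt: "?pr c \<le> ?tm" using small_pred[OF Th Tne VC cS] .
    define d where "d = (\<lambda>k. u1 k c - u2 k c)"
    have "(\<lambda>k. (u1 k c - ev c k) - (u2 k c - ev c k)) \<in> vS {1..?pr c}"
      by (rule lsub_diff[OF lsub_vS colprop_col[OF Th C1 cin] colprop_col[OF Th C2 cin]])
    then have dS: "d \<in> vS {1..?tm}" using vS_mono[of "{1..?pr c}" "{1..?tm}"] pt by (auto simp: d_def)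
    have fb: "(\<lambda>k. u1 k b) \<in> vS {1..b} \<and> u1 b b = 1" if "b \<in> {2*n+1-?tm..2*n}" for b
      using colprop_tri[OF Th C1 M1, of b] that TP(3) by auto
    have orth: "\<forall>b\<in>{2*n+1-?tm..2*n}. omega n d (\<lambda>k. u1 k b) = 0"
    proof
      fix b assume b: "b \<in> {2*n+1-?tm..2*n}"
      then have bB: "b \<in> {2*n - ?tm + 1..2*n}" and bin: "b \<in> {1..2*n}" using TP(3) by auto
      have "omega n d (\<lambda>k. u1 k b) = omega n (\<lambda>k. u1 k c) (\<lambda>k. u1 k b) - omega n (\<lambda>k. u2 k c) (\<lambda>k. u2 k b)"
        unfolding d_def omega_diff_left using colB[OF bB] by simp
      also have "\<dots> = 0" using S1 S2 unfolding Sp_iff[OF M1] Sp_iff[OF M2] using cin bin by auto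
      finally show "omega n d (\<lambda>k. u1 k b) = 0" .
    qed
    have "d = (\<lambda>k. 0)"
      by (rule tri_unique[OF TP(3) _ dS orth]) (rule fb)
    then show ?thesis by (auto simp: d_def fun_eq_iff)
  qed
  show "u1 = u2"
  proof (rule ext, rule ext)
    fix i c
    show "u1 i c = u2 i c"
    proof (cases "c \<in> {1..2*n}")
      case False then show ?thesis using M1 M2 unfolding Mats_def by auto
    next
      case True
      then have "c \<in> {2*n - ?tm + 1..2*n} \<or> c \<in> {1..2*n - ?tm}" by auto
      then show ?thesis using colB colS by (metis fun_cong)
    qed
  qed
qed

lemma u_of_eq:
  assumes Th: "\<Theta> \<subseteq> {1..n}" and Tne: "\<Theta> \<noteq> {}" and VC: "V \<in> Cset n \<Theta> (tau \<Theta>)"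
  shows "u_of n \<Theta> V = uV n \<Theta> V"
proof -
  have P: "uV n \<Theta> V \<in> U_Theta n \<Theta> \<and> act n (uV n \<Theta> V) (tau_opp n \<Theta>) = V"
    using colprop_U[OF Th u_Sp[OF Th Tne VC] u_colprop[OF Th Tne VC]] u_act[OF Th Tne VC] by auto
  show ?thesis unfolding u_of_def
    by (rule the_equality[where P="\<lambda>u. u \<in> U_Theta n \<Theta> \<and> act n u (tau_opp n \<Theta>) = V", OF P])
       (use U_unique[OF Th Tne VC] P in blast)
qed


lemma mmul_assoc: "mmul m (mmul m A B) C = mmul m A (mmul m B C)"
proof (intro ext)
  fix i j
  have "mmul m (mmul m A B) C i j = (\<Sum>k\<in>{1..m}. \<Sum>l\<in>{1..m}. A i l * B l k * C k j)"
    unfolding mmul_def by (simp add: sum_distrib_right)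
  also have "\<dots> = (\<Sum>l\<in>{1..m}. \<Sum>k\<in>{1..m}. A i l * B l k * C k j)"
    by (rule sum.swap)
  also have "\<dots> = mmul m A (mmul m B C) i j"
    unfolding mmul_def by (simp add: sum_distrib_left mult.assoc)
  finally show "mmul m (mmul m A B) C i j = mmul m A (mmul m B C) i j" .
qed

lemma idm_left: "A \<in> Mats m \<Longrightarrow> mmul m (idm m) A = A"
proof (intro ext)
  fix i j assume A: "A \<in> Mats m"
  have "mmul m (idm m) A i j = (\<Sum>k\<in>{1..m}. if k = i then (if i \<in> {1..m} then A i j else 0) else 0)"
    unfolding mmul_def idm_def by (rule sum.cong) auto
  also have "\<dots> = A i j" using A unfolding Mats_def by (auto simp: sum.delta)
  finally show "mmul m (idm m) A i j = A i j" .
qed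

lemma idm_right: "A \<in> Mats m \<Longrightarrow> mmul m A (idm m) = A"
proof (intro ext)
  fix i j assume A: "A \<in> Mats m"
  have "mmul m A (idm m) i j = (\<Sum>k\<in>{1..m}. if k = j then (if j \<in> {1..m} then A i j else 0) else 0)"
    unfolding mmul_def idm_def by (rule sum.cong) auto
  also have "\<dots> = A i j" using A unfolding Mats_def by (auto simp: sum.delta)
  finally show "mmul m A (idm m) i j = A i j" .
qed

lemma idm_Mats: "idm m \<in> Mats m" unfolding idm_def Mats_def by auto

lemma mmul_Mats: "A \<in> Mats m \<Longrightarrow> B \<in> Mats m \<Longrightarrow> mmul m A B \<in> Mats m"
  unfolding Mats_def mmul_def by auto

lemma minv_eq:
  assumes "B \<in> Mats m" "mmul m B A = idm m" "mmul m A B = idm m"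
  shows "minv m A = B"
  unfolding minv_def
proof (rule the_equality)
  show "B \<in> Mats m \<and> mmul m B A = idm m \<and> mmul m A B = idm m" using assms by auto
next
  fix B' assume B': "B' \<in> Mats m \<and> mmul m B' A = idm m \<and> mmul m A B' = idm m"
  have "B' = mmul m B' (idm m)" using B' idm_right by metis
  also have "\<dots> = mmul m (mmul m B' A) B" using assms(3) by (simp add: mmul_assoc)
  also have "\<dots> = B" using B' assms(1) idm_left by metis
  finally show "B' = B" .
qed

definition vinv :: "nat \<Rightarrow> matr \<Rightarrow> matr" where
  "vinv n u = (\<lambda>i j. if i \<in> {1..2*n} \<and> j \<in> {1..2*n} then
      - ((-1)^(2*n+1-i) * (-1)^j) * u (2*n+1-j) (2*n+1-i) else 0)"

lemma vinv_Mats: "vinv n u \<in> Mats (2*n)"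
  unfolding vinv_def Mats_def by auto

lemma omega_cols_alt:
  "omega n x y = (\<Sum>k\<in>{1..2*n}. (-1)^k * x (2*n+1-k) * y k)"
  unfolding omega_eq
  by (rule sum.reindex_bij_witness[of _ "\<lambda>b. 2*n+1-b" "\<lambda>a. 2*n+1-a"]) auto

lemma vinv_left:
  assumes uM: "u \<in> Mats (2*n)" and uS: "u \<in> Sp n"
  shows "mmul (2*n) (vinv n u) u = idm (2*n)"
proof (intro ext)
  fix i j
  show "mmul (2*n) (vinv n u) u i j = idm (2*n) i j"
  proof (cases "i \<in> {1..2*n}")
    case False then show ?thesis unfolding mmul_def vinv_def idm_def by auto
  next
    case True
    define ii where "ii = 2*n+1-i"
    have i': "ii \<in> {1..2*n}" using True by (auto simp: ii_def)
    have "mmul (2*n) (vinv n u) u i j = (\<Sum>k\<in>{1..2*n}. - ((-1) ^ ii * (-1)^k) * u (2*n+1-k) ii * u k j)"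
      unfolding mmul_def vinv_def using True by (intro sum.cong) (auto simp: ii_def)
    also have "\<dots> = - ((-1) ^ ii) * (\<Sum>k\<in>{1..2*n}. (-1)^k * u (2*n+1-k) ii * u k j)"
      by (simp add: sum_distrib_left algebra_simps sum_negf)
    also have "(\<Sum>k\<in>{1..2*n}. (-1)^k * u (2*n+1-k) ii * u k j) = omega n (\<lambda>a. u a ii) (\<lambda>a. u a j)"
      by (simp add: omega_cols_alt)
    also have "\<dots> = omega n (ev ii) (ev j)"
    proof (cases "j \<in> {1..2*n}")
      case True then show ?thesis using uS unfolding Sp_iff[OF uM] using i' by auto
    next
      case False
      have "(\<lambda>a. u a j) = (\<lambda>a. 0)" using uM False unfolding Mats_def by auto
      moreover have "omega n (ev ii) (ev j) = 0"
      proof -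
        have "2*n+1-ii \<in> {1..2*n}" using i' by auto
        then have "ev j (2*n+1-ii) = 0" using False by (auto simp: ev_def)
        then show ?thesis using omega_ev_left[OF i'] by simp
      qed
      ultimately show ?thesis by (simp add: omega_eq)
    qed
    also have "\<dots> = (-1)^(2*n+1-ii) * ev j (2*n+1-ii)" by (rule omega_ev_left[OF i'])
    also have "2*n+1-ii = i" using True by (auto simp: ii_def)
    finally have "mmul (2*n) (vinv n u) u i j = - ((-1) ^ ii) * ((-1)^i * ev j i)" .
    moreover have "odd (ii + i)" using True by (auto simp: ii_def)
    then have "(-1::real)^ii = - ((-1)^i)" by (rule neg1_pow_add_odd)
    ultimately have "mmul (2*n) (vinv n u) u i j = ((-1)^i * (-1)^i) * ev j i" by simp
    also have "\<dots> = ev j i" by (simp add: power_mult_distrib[symmetric])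
    finally show ?thesis using True by (auto simp: ev_def idm_def)
  qed
qed

lemma tri_cancel:
  assumes tri: "\<And>c. c \<in> {1..m} \<Longrightarrow> (\<forall>k. c < k \<longrightarrow> u k c = 0) \<and> u c c = 1"
    and W0: "mmul m W u = (\<lambda>i j. 0)"
  shows "c \<in> {1..m} \<Longrightarrow> W i c = 0"
proof (induction c rule: less_induct)
  case (less c)
  have "0 = mmul m W u i c" using W0 by (simp add: fun_eq_iff)
  also have "\<dots> = (\<Sum>k\<in>{1..m}. if k = c then W i c else 0)"
    unfolding mmul_def
  proof (rule sum.cong)
    fix k assume k: "k \<in> {1..m}"
    show "W i k * u k c = (if k = c then W i c else 0)"
    proof (cases "k < c")
      case True then show ?thesis using less.IH[of k] k by auto
    next
      case False then show ?thesis using tri[OF less.prems] by auto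
    qed
  qed simp
  also have "\<dots> = W i c" using less.prems by (simp add: sum.delta)
  finally show ?case by simp
qed

lemma vinv_right:
  assumes uM: "u \<in> Mats (2*n)" and uS: "u \<in> Sp n"
    and tri: "\<And>c. c \<in> {1..2*n} \<Longrightarrow> (\<forall>k. c < k \<longrightarrow> u k c = 0) \<and> u c c = 1"
  shows "mmul (2*n) u (vinv n u) = idm (2*n)"
proof -
  define W where "W = (\<lambda>i j. mmul (2*n) u (vinv n u) i j - idm (2*n) i j)"
  have "mmul (2*n) W u = (\<lambda>i j. mmul (2*n) (mmul (2*n) u (vinv n u)) u i j - mmul (2*n) (idm (2*n)) u i j)"
    unfolding W_def mmul_def by (auto simp: algebra_simps sum_subtractf)
  also have "mmul (2*n) (mmul (2*n) u (vinv n u)) u = u"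
    by (simp add: mmul_assoc vinv_left[OF uM uS] idm_right[OF uM])
  also have "mmul (2*n) (idm (2*n)) u = u" by (rule idm_left[OF uM])
  finally have W0: "mmul (2*n) W u = (\<lambda>i j. 0)" by simp
  have "W i c = 0" for i c
  proof (cases "c \<in> {1..2*n}")
    case True then show ?thesis using tri_cancel[OF tri W0] by blast
  next
    case False then show ?thesis unfolding W_def mmul_def idm_def vinv_def by auto
  qed
  then show ?thesis unfolding W_def by (auto simp: fun_eq_iff)
qed

lemma minv_vinv:
  assumes uM: "u \<in> Mats (2*n)" and uS: "u \<in> Sp n"
    and tri: "\<And>c. c \<in> {1..2*n} \<Longrightarrow> (\<forall>k. c < k \<longrightarrow> u k c = 0) \<and> u c c = 1"
  shows "minv (2*n) u = vinv n u"
  by (rule minv_eq[OF vinv_Mats vinv_left[OF uM uS] vinv_right[OF uM uS tri]])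

lemma vinv_tri:
  assumes tri: "\<And>c. c \<in> {1..2*n} \<Longrightarrow> (\<forall>k. c < k \<longrightarrow> u k c = 0) \<and> u c c = 1"
  shows "c \<in> {1..2*n} \<Longrightarrow> (\<forall>k. c < k \<longrightarrow> vinv n u k c = 0) \<and> vinv n u c c = 1"
proof -
  assume c: "c \<in> {1..2*n}"
  have c': "2*n+1-c \<in> {1..2*n}" using c by auto
  have "vinv n u k c = 0" if "c < k" for k
  proof (cases "k \<in> {1..2*n}")
    case True
    then have "2*n+1-c > 2*n+1-k" using that c by auto
    moreover have "2*n+1-k \<in> {1..2*n}" using True by auto
    ultimately have "u (2*n+1-c) (2*n+1-k) = 0" using tri by blast
    then show ?thesis unfolding vinv_def by simp
  qed (auto simp: vinv_def)
  moreover have "vinv n u c c = 1"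
  proof -
    have "odd ((2*n+1-c) + c)" using c by auto
    then have "(-1::real)^(2*n+1-c) = - ((-1)^c)" by (rule neg1_pow_add_odd)
    then show ?thesis using c tri[OF c'] unfolding vinv_def by (simp add: power_mult_distrib[symmetric])
  qed
  ultimately show ?thesis by blast
qed


lemma vinner_sym: "vinner m x y = vinner m y x"
  unfolding vinner_def by (simp add: mult.commute)

lemma vinner_diff_left: "vinner m (vsub x y) z = vinner m x z - vinner m y z"
  unfolding vinner_def vsub_def by (simp add: algebra_simps sum_subtractf)

lemma vinner_lin_comb_left: "vinner m (lin_comb c vs) y = (\<Sum>j<length vs. c j * vinner m (vs!j) y)"
  unfolding vinner_def lin_comb_def by (simp add: sum_distrib_right sum_distrib_left mult.assoc) (rule sum.swap)

lemma vinner_lin_comb_right: "vinner m y (lin_comb c vs) = (\<Sum>j<length vs. c j * vinner m y (vs!j))"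
  using vinner_lin_comb_left[of m c vs y] by (simp add: vinner_sym)

lemma vinner_self_zero:
  assumes "vinner m x x = 0" "k \<in> {1..m}" shows "x k = 0"
proof -
  have "(\<Sum>k\<in>{1..m}. x k * x k) = 0" using assms unfolding vinner_def by simp
  then have "\<forall>k\<in>{1..m}. x k * x k = 0" by (subst (asm) sum_nonneg_eq_0_iff) auto
  then show ?thesis using assms by auto
qed

definition gram :: "nat \<Rightarrow> vect list \<Rightarrow> real mat" where
  "gram m vs = mat (length vs) (length vs) (\<lambda>(i,j). vinner m (vs!i) (vs!j))"

lemma gram_det:
  assumes R: "set vs \<subseteq> Rn m" and li: "lin_indep vs"
  shows "det (gram m vs) \<noteq> 0"
proof
  let ?d = "length vs"
  have Gc: "gram m vs \<in> carrier_mat ?d ?d" unfolding gram_def by auto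
  assume "det (gram m vs) = 0"
  then obtain v where v: "v \<in> carrier_vec ?d" "v \<noteq> 0\<^sub>v ?d" "gram m vs *\<^sub>v v = 0\<^sub>v ?d"
    using det_0_iff_vec_prod_zero[OF Gc] by blast
  define c where "c j = v $ j" for j
  define x where "x = lin_comb c vs"
  have Gv: "(\<Sum>j<?d. vinner m (vs!i) (vs!j) * c j) = 0" if "i < ?d" for i
  proof -
    have "(gram m vs *\<^sub>v v) $ i = 0" using v(3) that by simp
    then show ?thesis using that v(1) unfolding gram_def c_def
      by (simp add: scalar_prod_def lessThan_atLeast0 mult.commute)
  qed
  have "vinner m x x = (\<Sum>i<?d. c i * vinner m (vs!i) x)"
    unfolding x_def by (rule vinner_lin_comb_left)
  also have "\<dots> = (\<Sum>i<?d. c i * (\<Sum>j<?d. c j * vinner m (vs!i) (vs!j)))"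
    unfolding x_def by (simp add: vinner_lin_comb_right)
  also have "\<dots> = 0" using Gv by (simp add: mult.commute)
  finally have xx: "vinner m x x = 0" .
  have xR: "x \<in> Rn m" using lspan_Rn[OF R] unfolding x_def lspan_def by blast
  have "x = vzero"
  proof
    fix k show "x k = vzero k"
    proof (cases "k \<in> {1..m}")
      case True then show ?thesis using vinner_self_zero[OF xx] by (simp add: vzero_def)
    next
      case False then show ?thesis using xR by (auto simp: Rn_def vzero_def)
    qed
  qed
  then have "\<forall>j<?d. c j = 0" using li unfolding lin_indep_def x_def by blast
  then have "v = 0\<^sub>v ?d" using v(1) by (intro eq_vecI) (auto simp: c_def)
  then show False using v(2) by simp
qed


definition gramH :: "nat \<Rightarrow> vect list \<Rightarrow> real mat" where
  "gramH m vs = (1 / det (gram m vs)) \<cdot>\<^sub>m adj_mat (gram m vs)"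

lemma gramH_inv:
  assumes R: "set vs \<subseteq> Rn m" and li: "lin_indep vs" and l: "l < length vs" and j: "j < length vs"
  shows "(\<Sum>i<length vs. vinner m (vs!l) (vs!i) * gramH m vs $$ (i,j)) = (if l = j then 1 else 0)"
proof -
  let ?d = "length vs" and ?G = "gram m vs"
  have Gc: "?G \<in> carrier_mat ?d ?d" unfolding gram_def by auto
  have dz: "det ?G \<noteq> 0" using gram_det[OF R li] .
  have A: "?G * adj_mat ?G = det ?G \<cdot>\<^sub>m 1\<^sub>m ?d" using adj_mat(2)[OF Gc] .
  have Ac: "adj_mat ?G \<in> carrier_mat ?d ?d" using adj_mat(1)[OF Gc] .
  have "(?G * adj_mat ?G) $$ (l,j) = (\<Sum>i<?d. vinner m (vs!l) (vs!i) * adj_mat ?G $$ (i,j))"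
    using Gc Ac l j by (simp add: scalar_prod_def lessThan_atLeast0 gram_def)
  then have eq: "(\<Sum>i<?d. vinner m (vs!l) (vs!i) * adj_mat ?G $$ (i,j)) = det ?G * (if l = j then 1 else 0)"
    using A l j by simp
  have "(\<Sum>i<?d. vinner m (vs!l) (vs!i) * gramH m vs $$ (i,j)) =
        (1 / det ?G) * (\<Sum>i<?d. vinner m (vs!l) (vs!i) * adj_mat ?G $$ (i,j))"
    unfolding gramH_def using Ac j by (simp add: sum_distrib_left algebra_simps)
  also have "\<dots> = (if l = j then 1 else 0)" using eq dz by simp
  finally show ?thesis .
qed

definition projP :: "nat \<Rightarrow> vect list \<Rightarrow> matr" where
  "projP m vs = (\<lambda>a b. \<Sum>i<length vs. \<Sum>j<length vs. (vs!i) a * gramH m vs $$ (i,j) * (vs!j) b)"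

definition pcoef :: "nat \<Rightarrow> vect list \<Rightarrow> vect \<Rightarrow> nat \<Rightarrow> real" where
  "pcoef m vs x i = (\<Sum>j<length vs. gramH m vs $$ (i,j) * vinner m (vs!j) x)"

lemma projP_mvec: "mvec m (projP m vs) x = lin_comb (pcoef m vs x) vs"
proof
  fix a
  let ?d = "length vs" and ?H = "gramH m vs"
  have "mvec m (projP m vs) x a = (\<Sum>b\<in>{1..m}. \<Sum>i<?d. \<Sum>j<?d. (vs!i) a * ?H $$ (i,j) * ((vs!j) b * x b))"
    unfolding mvec_def projP_def by (simp add: sum_distrib_right mult.assoc)
  also have "\<dots> = (\<Sum>i<?d. \<Sum>b\<in>{1..m}. \<Sum>j<?d. (vs!i) a * ?H $$ (i,j) * ((vs!j) b * x b))"
    by (rule sum.swap)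
  also have "\<dots> = (\<Sum>i<?d. \<Sum>j<?d. \<Sum>b\<in>{1..m}. (vs!i) a * ?H $$ (i,j) * ((vs!j) b * x b))"
    by (rule sum.cong[OF refl], rule sum.swap)
  also have "\<dots> = (\<Sum>i<?d. (vs!i) a * (\<Sum>j<?d. ?H $$ (i,j) * vinner m (vs!j) x))"
    unfolding vinner_def by (simp add: sum_distrib_left mult.assoc)
  also have "\<dots> = lin_comb (pcoef m vs x) vs a"
    unfolding lin_comb_def pcoef_def by (simp add: mult.commute)
  finally show "mvec m (projP m vs) x a = lin_comb (pcoef m vs x) vs a" .
qed

lemma projP_orth:
  assumes R: "set vs \<subseteq> Rn m" and li: "lin_indep vs" and l: "l < length vs"
  shows "vinner m (vsub x (mvec m (projP m vs) x)) (vs!l) = 0"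
proof -
  let ?d = "length vs" and ?H = "gramH m vs"
  have "vinner m (mvec m (projP m vs) x) (vs!l) = (\<Sum>i<?d. pcoef m vs x i * vinner m (vs!i) (vs!l))"
    unfolding projP_mvec by (rule vinner_lin_comb_left)
  also have "\<dots> = (\<Sum>i<?d. \<Sum>j<?d. vinner m (vs!l) (vs!i) * ?H $$ (i,j) * vinner m (vs!j) x)"
    unfolding pcoef_def by (simp add: sum_distrib_left sum_distrib_right vinner_sym[of m "vs!_" "vs!l"] algebra_simps)
  also have "\<dots> = (\<Sum>j<?d. \<Sum>i<?d. vinner m (vs!l) (vs!i) * ?H $$ (i,j) * vinner m (vs!j) x)"
    by (rule sum.swap)
  also have "\<dots> = (\<Sum>j<?d. (if l = j then 1 else 0) * vinner m (vs!j) x)"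
  proof (rule sum.cong[OF refl])
    fix j assume j: "j \<in> {..<?d}"
    have "(\<Sum>i<?d. vinner m (vs!l) (vs!i) * ?H $$ (i,j) * vinner m (vs!j) x) =
          (\<Sum>i<?d. vinner m (vs!l) (vs!i) * ?H $$ (i,j)) * vinner m (vs!j) x"
      by (simp add: sum_distrib_right)
    then show "(\<Sum>i<?d. vinner m (vs!l) (vs!i) * ?H $$ (i,j) * vinner m (vs!j) x) = (if l = j then 1 else 0) * vinner m (vs!j) x"
      using gramH_inv[OF R li l] j by simp
  qed
  also have "\<dots> = (\<Sum>j<?d. if j = l then vinner m (vs!j) x else 0)" by (rule sum.cong) auto
  also have "\<dots> = vinner m (vs!l) x" using l by (simp add: sum.delta)
  finally have h: "vinner m (mvec m (projP m vs) x) (vs!l) = vinner m (vs!l) x" .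
  show ?thesis unfolding vinner_diff_left h using vinner_sym[of m x "vs!l"] by simp
qed

definition pspec :: "nat \<Rightarrow> vect set \<Rightarrow> matr \<Rightarrow> bool" where
  "pspec m W P \<longleftrightarrow> P \<in> Mats m \<and>
      (\<forall>x\<in>Rn m. mvec m P x \<in> W \<and> (\<forall>w\<in>W. vinner m (vsub x (mvec m P x)) w = 0))"

lemma pspec_unique:
  assumes W: "lsub W" "W \<subseteq> Rn m" and P1: "pspec m W P1" and P2: "pspec m W P2"
  shows "P1 = P2"
proof -
  have col: "mvec m P1 x k = mvec m P2 x k" if x: "x \<in> Rn m" and k: "k \<in> {1..m}" for x k
  proof -
    define d where "d = (\<lambda>k. mvec m P1 x k - mvec m P2 x k)"
    have S1: "mvec m P1 x \<in> W" "\<forall>w\<in>W. vinner m (vsub x (mvec m P1 x)) w = 0"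
      using P1 x unfolding pspec_def by blast+
    have S2: "mvec m P2 x \<in> W" "\<forall>w\<in>W. vinner m (vsub x (mvec m P2 x)) w = 0"
      using P2 x unfolding pspec_def by blast+
    have dW: "d \<in> W" unfolding d_def by (rule lsub_diff[OF W(1) S1(1) S2(1)])
    have deq: "d = vsub (vsub x (mvec m P2 x)) (vsub x (mvec m P1 x))" by (auto simp: d_def vsub_def)
    have "vinner m d d = vinner m (vsub (vsub x (mvec m P2 x)) (vsub x (mvec m P1 x))) d"
      by (subst deq) (rule refl)
    also have "\<dots> = vinner m (vsub x (mvec m P2 x)) d - vinner m (vsub x (mvec m P1 x)) d"
      by (rule vinner_diff_left)
    also have "\<dots> = 0" using S1(2) S2(2) dW by simp
    finally have "d k = 0" by (rule vinner_self_zero[OF _ k])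
    then show ?thesis unfolding d_def by simp
  qed
  show ?thesis
  proof (rule ext, rule ext)
    fix a b
    show "P1 a b = P2 a b"
    proof (cases "a \<in> {1..m} \<and> b \<in> {1..m}")
      case True
      have "ev b \<in> Rn m" using True by (auto simp: Rn_vS intro: ev_vS)
      have "mvec m P1 (ev b) a = mvec m P2 (ev b) a" by (rule col) (use True \<open>ev b \<in> Rn m\<close> in auto)
      moreover have "mvec m P1 (ev b) = (\<lambda>i. P1 i b)" using True by (intro mvec_ev) auto
      moreover have "mvec m P2 (ev b) = (\<lambda>i. P2 i b)" using True by (intro mvec_ev) auto
      ultimately show ?thesis by simp
    next
      case False then show ?thesis using P1 P2 unfolding pspec_def Mats_def by auto
    qed
  qed
qed

lemma projm_spec:
  assumes R: "set vs \<subseteq> Rn m" and li: "lin_indep vs"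
  shows "pspec m (lspan vs) (projm m (lspan vs))"
proof -
  let ?P = "\<lambda>a b. if a \<in> {1..m} \<and> b \<in> {1..m} then projP m vs a b else 0"
  have eqv: "mvec m ?P x = mvec m (projP m vs) x" if "x \<in> Rn m" for x
  proof
    fix a
    show "mvec m ?P x a = mvec m (projP m vs) x a"
    proof (cases "a \<in> {1..m}")
      case True then show ?thesis unfolding mvec_def by (intro sum.cong) auto
    next
      case False
      have "mvec m (projP m vs) x a = lin_comb (pcoef m vs x) vs a" by (simp add: projP_mvec)
      also have "\<dots> = 0" using lspan_Rn[OF R] False unfolding lspan_def Rn_def by blast
      finally have h: "mvec m (projP m vs) x a = 0" .
      have "mvec m ?P x a = 0" unfolding mvec_def using False by (intro sum.neutral) auto
      then show ?thesis using h by simp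
    qed
  qed
  have S: "pspec m (lspan vs) ?P"
    unfolding pspec_def
  proof (intro conjI ballI)
    show "?P \<in> Mats m" unfolding Mats_def by auto
    fix x assume x: "x \<in> Rn m"
    show "mvec m ?P x \<in> lspan vs" unfolding eqv[OF x] projP_mvec lspan_def by blast
    fix w assume "w \<in> lspan vs"
    then obtain e where w: "w = lin_comb e vs" unfolding lspan_def by auto
    show "vinner m (vsub x (mvec m ?P x)) w = 0"
      unfolding eqv[OF x] w vinner_lin_comb_right using projP_orth[OF R li] by simp
  qed
  have W: "lsub (lspan vs)" "lspan vs \<subseteq> Rn m" using lsub_lspan lspan_Rn[OF R] by auto
  have "projm m (lspan vs) = ?P"
    unfolding projm_def
  proof (rule the_equality)
    show "?P \<in> Mats m \<and> (\<forall>x\<in>Rn m. mvec m ?P x \<in> lspan vs \<and> (\<forall>w\<in>lspan vs. vinner m (vsub x (mvec m ?P x)) w = 0))"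
      using S unfolding pspec_def .
    fix P assume "P \<in> Mats m \<and> (\<forall>x\<in>Rn m. mvec m P x \<in> lspan vs \<and> (\<forall>w\<in>lspan vs. vinner m (vsub x (mvec m P x)) w = 0))"
    then have "pspec m (lspan vs) P" unfolding pspec_def .
    then show "P = ?P" using pspec_unique[OF W _ S] by blast
  qed
  then show ?thesis using S by simp
qed

lemma projm_iso:
  assumes "V \<in> iso_flags n \<Theta>" "i \<in> \<Theta>"
  shows "pspec (2*n) (V i) (projm (2*n) (V i))"
proof -
  obtain vs where vs: "set vs \<subseteq> Rn (2*n)" "lin_indep vs" "lspan vs = V i"
    using assms unfolding iso_flags_def subspace_dim_def by blast
  show ?thesis using projm_spec[OF vs(1,2)] vs(3) by simp
qed


definition subT :: "nat \<Rightarrow> nat \<Rightarrow> matr \<Rightarrow> real mat" where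
  "subT n k g = mat k k (\<lambda>(i,j). g (i+1) (2*n-k+1+j))"

definition subB :: "nat \<Rightarrow> nat \<Rightarrow> matr \<Rightarrow> real mat" where
  "subB n k g = mat k k (\<lambda>(i,j). g (2*n-k+1+i) (2*n-k+1+j))"

lemma subT_carrier: "subT n k g \<in> carrier_mat k k" unfolding subT_def by auto
lemma subB_carrier: "subB n k g \<in> carrier_mat k k" unfolding subB_def by auto

lemma sum_shift_B:
  assumes "k \<le> 2*(n::nat)"
  shows "(\<Sum>c\<in>{2*n-k+1..2*n}. f c) = (\<Sum>l<k. f (2*n-k+1+l))"
  by (rule sum.reindex_bij_witness[of _ "\<lambda>l. 2*n-k+1+l" "\<lambda>c. c - (2*n-k+1)"]) (use assms in auto)

lemma basis_formula:
  assumes P: "pspec (2*n) W P" and W: "W = mvec (2*n) g ` vS {2*n-k+1..2*n}" and k: "k \<le> 2*n"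
  shows "\<exists>Q \<in> carrier_mat k k. det (subT n k P) * det (subB n k P) = det (subT n k g) * det (subB n k g) * (det Q)^2"
proof -
  let ?b = "\<lambda>j. 2*n-k+1+j"
  have ex: "\<forall>j\<in>{..<k}. \<exists>w. w \<in> vS {2*n-k+1..2*n} \<and> mvec (2*n) P (ev (?b j)) = mvec (2*n) g w"
  proof
    fix j assume j: "j \<in> {..<k}"
    have "ev (?b j) \<in> Rn (2*n)" using j k by (auto simp: Rn_vS intro: ev_vS)
    then have "mvec (2*n) P (ev (?b j)) \<in> W" using P unfolding pspec_def by blast
    then show "\<exists>w. w \<in> vS {2*n-k+1..2*n} \<and> mvec (2*n) P (ev (?b j)) = mvec (2*n) g w"
      unfolding W by blast
  qed
  obtain wf where wf: "\<And>j. j < k \<Longrightarrow> wf j \<in> vS {2*n-k+1..2*n} \<and> mvec (2*n) P (ev (?b j)) = mvec (2*n) g (wf j)"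
    using bchoice[OF ex] by auto
  define Q where "Q = mat k k (\<lambda>(l,j). wf j (?b l))"
  have Qc: "Q \<in> carrier_mat k k" unfolding Q_def by auto
  have entry: "P a (?b j) = (\<Sum>l<k. g a (?b l) * Q $$ (l,j))" if j: "j < k" for a j
  proof -
    have bj: "?b j \<in> {1..2*n}" using j k by auto
    have "P a (?b j) = mvec (2*n) P (ev (?b j)) a" using mvec_ev[OF bj] by simp
    also have "\<dots> = mvec (2*n) g (wf j) a" using wf[OF j] by simp
    also have "\<dots> = (\<Sum>c\<in>{2*n-k+1..2*n}. wf j c * g a c)"
      using mvec_vS[of "wf j" "{2*n-k+1..2*n}" "2*n" g] wf[OF j] by auto
    also have "\<dots> = (\<Sum>l<k. wf j (?b l) * g a (?b l))" by (rule sum_shift_B[OF k])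
    also have "\<dots> = (\<Sum>l<k. g a (?b l) * Q $$ (l,j))"
      using j by (intro sum.cong) (auto simp: Q_def)
    finally show ?thesis .
  qed
  have entry': "P a (Suc (2*n-k+j)) = (\<Sum>l = 0..<k. g a (Suc (2*n-k+l)) * Q $$ (l,j))" if "j < k" for a j
    using entry[OF that, of a] by (simp add: lessThan_atLeast0)
  have T: "subT n k P = subT n k g * Q"
    by (rule eq_matI) (use Qc in \<open>auto simp: subT_def scalar_prod_def entry'\<close>)
  have B: "subB n k P = subB n k g * Q"
    by (rule eq_matI) (use Qc in \<open>auto simp: subB_def scalar_prod_def entry'\<close>)
  have "det (subT n k P) * det (subB n k P) = det (subT n k g) * det (subB n k g) * (det Q)^2"
    unfolding T B det_mult[OF subT_carrier Qc] det_mult[OF subB_carrier Qc] by (simp add: power2_eq_square)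
  then show ?thesis using Qc by blast
qed

lemma det_subB_unitri:
  assumes tri: "\<And>c. c \<in> {1..2*n} \<Longrightarrow> (\<forall>k. c < k \<longrightarrow> g k c = 0) \<and> g c c = 1" and k: "k \<le> 2*n"
  shows "det (subB n k g) = 1"
proof -
  have ut: "upper_triangular (subB n k g)"
  proof (rule upper_triangularI)
    fix i j assume ij: "j < i" "i < dim_row (subB n k g)"
    then have "2*n-k+1+j \<in> {1..2*n}" using k by (auto simp: subB_def)
    then show "subB n k g $$ (i,j) = 0" using tri ij by (auto simp: subB_def)
  qed
  have "det (subB n k g) = prod_list (diag_mat (subB n k g))"
    by (rule det_upper_triangular[OF ut subB_carrier])
  also have "diag_mat (subB n k g) = map (\<lambda>i. 1) [0..<k]"
  proof -
    have "\<And>i. i < k \<Longrightarrow> g (2*n-k+1+i) (2*n-k+1+i) = 1"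
    proof -
      fix i assume "i < k" then have "2*n-k+1+i \<in> {1..2*n}" using k by auto
      then show "g (2*n-k+1+i) (2*n-k+1+i) = 1" using tri by blast
    qed
    then show ?thesis unfolding diag_mat_def subB_def by auto
  qed
  also have "prod_list (map (\<lambda>i. 1::real) [0..<k]) = 1" by (induction k) auto
  finally show ?thesis .
qed


definition Dm :: "nat \<Rightarrow> real mat" where
  "Dm k = mat k k (\<lambda>(i,j). if i = j then (-1)^i else 0)"

definition Rm :: "nat \<Rightarrow> real mat" where
  "Rm k = mat k k (\<lambda>(i,j). if i + j = k - 1 then 1 else 0)"

lemma Dm_carrier: "Dm k \<in> carrier_mat k k" unfolding Dm_def by auto
lemma Rm_carrier: "Rm k \<in> carrier_mat k k" unfolding Rm_def by auto

lemma Dm_mult: assumes "Y \<in> carrier_mat k k" shows "Dm k * Y = mat k k (\<lambda>(i,j). (-1)^i * Y $$ (i,j))"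
proof (rule eq_matI)
  fix i j assume ij: "i < dim_row (mat k k (\<lambda>(i,j). (-1)^i * Y $$ (i,j)))" "j < dim_col (mat k k (\<lambda>(i,j). (-1)^i * Y $$ (i,j)))"
  then have i: "i < k" and j: "j < k" by auto
  have "(Dm k * Y) $$ (i,j) = (\<Sum>l\<in>{0..<k}. (if i = l then (-1)^i else 0) * Y $$ (l,j))"
    using assms i j by (simp add: Dm_def scalar_prod_def)
  also have "\<dots> = (\<Sum>l\<in>{0..<k}. if l = i then (-1)^i * Y $$ (l,j) else 0)" by (rule sum.cong) auto
  also have "\<dots> = (-1)^i * Y $$ (i,j)" using i by (simp add: sum.delta)
  finally show "(Dm k * Y) $$ (i,j) = mat k k (\<lambda>(i,j). (-1)^i * Y $$ (i,j)) $$ (i,j)" using i j by simp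
qed (use assms in \<open>auto simp: Dm_def\<close>)

lemma mult_Dm: assumes "Y \<in> carrier_mat k k" shows "Y * Dm k = mat k k (\<lambda>(i,j). Y $$ (i,j) * (-1)^j)"
proof (rule eq_matI)
  fix i j assume ij: "i < dim_row (mat k k (\<lambda>(i,j). Y $$ (i,j) * (-1)^j))" "j < dim_col (mat k k (\<lambda>(i,j). Y $$ (i,j) * (-1)^j))"
  then have i: "i < k" and j: "j < k" by auto
  have "(Y * Dm k) $$ (i,j) = (\<Sum>l\<in>{0..<k}. Y $$ (i,l) * (if l = j then (-1)^l else 0))"
    using assms i j by (simp add: Dm_def scalar_prod_def)
  also have "\<dots> = (\<Sum>l\<in>{0..<k}. if l = j then Y $$ (i,l) * (-1)^j else 0)" by (rule sum.cong) auto
  also have "\<dots> = Y $$ (i,j) * (-1)^j" using j by (simp add: sum.delta)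
  finally show "(Y * Dm k) $$ (i,j) = mat k k (\<lambda>(i,j). Y $$ (i,j) * (-1)^j) $$ (i,j)" using i j by simp
qed (use assms in \<open>auto simp: Dm_def\<close>)

lemma Rm_mult: assumes "Y \<in> carrier_mat k k" shows "Rm k * Y = mat k k (\<lambda>(i,j). Y $$ (k-1-i, j))"
proof (rule eq_matI)
  fix i j assume ij: "i < dim_row (mat k k (\<lambda>(i,j). Y $$ (k-1-i, j)))" "j < dim_col (mat k k (\<lambda>(i,j). Y $$ (k-1-i, j)))"
  then have i: "i < k" and j: "j < k" by auto
  have "(Rm k * Y) $$ (i,j) = (\<Sum>l\<in>{0..<k}. (if i + l = k - 1 then 1 else 0) * Y $$ (l,j))"
    using assms i j by (simp add: Rm_def scalar_prod_def)
  also have "\<dots> = (\<Sum>l\<in>{0..<k}. if l = k-1-i then Y $$ (l,j) else 0)" by (rule sum.cong) (use i in auto)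
  also have "\<dots> = Y $$ (k-1-i,j)" using i by (simp add: sum.delta)
  finally show "(Rm k * Y) $$ (i,j) = mat k k (\<lambda>(i,j). Y $$ (k-1-i, j)) $$ (i,j)" using i j by simp
qed (use assms in \<open>auto simp: Rm_def\<close>)

lemma mult_Rm: assumes "Y \<in> carrier_mat k k" shows "Y * Rm k = mat k k (\<lambda>(i,j). Y $$ (i, k-1-j))"
proof (rule eq_matI)
  fix i j assume ij: "i < dim_row (mat k k (\<lambda>(i,j). Y $$ (i, k-1-j)))" "j < dim_col (mat k k (\<lambda>(i,j). Y $$ (i, k-1-j)))"
  then have i: "i < k" and j: "j < k" by auto
  have "(Y * Rm k) $$ (i,j) = (\<Sum>l\<in>{0..<k}. Y $$ (i,l) * (if l + j = k - 1 then 1 else 0))"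
    using assms i j by (simp add: Rm_def scalar_prod_def)
  also have "\<dots> = (\<Sum>l\<in>{0..<k}. if l = k-1-j then Y $$ (i,l) else 0)" by (rule sum.cong) (use j in auto)
  also have "\<dots> = Y $$ (i,k-1-j)" using j by (simp add: sum.delta)
  finally show "(Y * Rm k) $$ (i,j) = mat k k (\<lambda>(i,j). Y $$ (i, k-1-j)) $$ (i,j)" using i j by simp
qed (use assms in \<open>auto simp: Rm_def\<close>)

lemma det_Dm_sq: "det (Dm k) * det (Dm k) = 1"
proof -
  have "Dm k * Dm k = 1\<^sub>m k"
    unfolding Dm_mult[OF Dm_carrier] by (rule eq_matI) (auto simp: Dm_def power_mult_distrib[symmetric])
  then have "det (Dm k * Dm k) = 1" by simp
  then show ?thesis using det_mult[OF Dm_carrier Dm_carrier] by simp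
qed

lemma det_Rm_sq: "det (Rm k) * det (Rm k) = 1"
proof -
  have "Rm k * Rm k = 1\<^sub>m k"
    unfolding Rm_mult[OF Rm_carrier] by (rule eq_matI) (auto simp: Rm_def)
  then have "det (Rm k * Rm k) = 1" by simp
  then show ?thesis using det_mult[OF Rm_carrier Rm_carrier] by simp
qed

lemma neg1_pow_even_sum: "even (a + b) \<Longrightarrow> (-1::real)^a = (-1)^b"
  by (auto simp: minus_one_power_iff)

lemma subT_vinv:
  assumes k: "odd k" "k \<le> 2*n"
  shows "det (subT n k (vinv n u)) = - det (subT n k u)"
proof -
  let ?X = "subT n k u"
  have Xc: "?X \<in> carrier_mat k k" by (rule subT_carrier)
  have Tc: "transpose_mat ?X \<in> carrier_mat k k" using Xc by simp
  let ?M = "Dm k * (Rm k * (transpose_mat ?X * Rm k)) * Dm k"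
  have M: "?M = mat k k (\<lambda>(i,j). (-1)^i * ?X $$ (k-1-j, k-1-i) * (-1)^j)"
  proof -
    have "transpose_mat ?X * Rm k = mat k k (\<lambda>(i,j). ?X $$ (k-1-j, i))"
      unfolding mult_Rm[OF Tc] using Xc by (auto intro!: eq_matI)
    moreover have "Rm k * mat k k (\<lambda>(i,j). ?X $$ (k-1-j, i)) = mat k k (\<lambda>(i,j). ?X $$ (k-1-j, k-1-i))"
      unfolding Rm_mult[OF mat_carrier] by (auto intro!: eq_matI)
    moreover have "Dm k * mat k k (\<lambda>(i,j). ?X $$ (k-1-j, k-1-i)) = mat k k (\<lambda>(i,j). (-1)^i * ?X $$ (k-1-j, k-1-i))"
      unfolding Dm_mult[OF mat_carrier] by (auto intro!: eq_matI)
    moreover have "mat k k (\<lambda>(i,j). (-1)^i * ?X $$ (k-1-j, k-1-i)) * Dm k = mat k k (\<lambda>(i,j). (-1)^i * ?X $$ (k-1-j, k-1-i) * (-1)^j)"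
      unfolding mult_Dm[OF mat_carrier] by (auto intro!: eq_matI)
    ultimately show ?thesis by simp
  qed
  have eq: "subT n k (vinv n u) = (-1) \<cdot>\<^sub>m ?M"
  proof (rule eq_matI)
    fix i j assume "i < dim_row ((-1) \<cdot>\<^sub>m ?M)" "j < dim_col ((-1) \<cdot>\<^sub>m ?M)"
    then have i: "i < k" and j: "j < k" unfolding M by auto
    have r1: "i + 1 \<in> {1..2*n}" "2*n-k+1+j \<in> {1..2*n}" using i j k by auto
    have a1: "2*n+1-(i+1) = 2*n - i" and a2: "2*n+1-(2*n-k+1+j) = k - j" using i j k by auto
    have "subT n k (vinv n u) $$ (i,j) = - ((-1)^(2*n - i) * (-1)^(2*n-k+1+j)) * u (k - j) (2*n - i)"
    proof -
      have a3: "2*n - (2*n-k+j) = k - j" using j k by auto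
      show ?thesis using i j r1 unfolding subT_def vinv_def a1 a2 by (simp add: a3)
    qed
    also have "(-1::real)^(2*n - i) = (-1)^i" by (rule neg1_pow_even_sum) (use i k in auto)
    also have "(-1::real)^(2*n-k+1+j) = (-1)^j" by (rule neg1_pow_even_sum) (use j k in auto)
    also have "u (k - j) (2*n - i) = ?X $$ (k-1-j, k-1-i)"
    proof -
      have "k - 1 - j + 1 = k - j" "2*n-k+1+(k-1-i) = 2*n - i" "Suc (2*n - Suc i) = 2*n - i" using i j k by auto
      then show ?thesis using i j unfolding subT_def by simp
    qed
    finally show "subT n k (vinv n u) $$ (i,j) = ((-1) \<cdot>\<^sub>m ?M) $$ (i,j)"
      unfolding M using i j by simp
  qed (auto simp: subT_def M Dm_def)
  have "det (subT n k (vinv n u)) = (-1)^k * det ?M"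
    unfolding eq det_smult by (simp add: M)
  also have "(-1::real)^k = -1" using k by simp
  also have "det ?M = det (Dm k) * (det (Rm k) * (det (transpose_mat ?X) * det (Rm k))) * det (Dm k)"
    using Dm_carrier Rm_carrier Tc
    by (simp add: det_mult[of _ k] mult_carrier_mat[of _ k k _ k])
  also have "\<dots> = (det (Dm k) * det (Dm k)) * (det (Rm k) * det (Rm k)) * det ?X"
    using det_transpose[OF Xc] by (simp add: algebra_simps)
  also have "\<dots> = det ?X" by (simp add: det_Dm_sq det_Rm_sq)
  finally show ?thesis by simp
qed


definition ginv :: "nat \<Rightarrow> nat \<Rightarrow> flag \<Rightarrow> real" where
  "ginv n k W = det (subT n k (projm (2*n) (W k))) * det (subB n k (projm (2*n) (W k)))"

lemma ginv_nonzero: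
  assumes Th: "\<Theta> \<subseteq> {1..n}" and k: "k \<in> \<Theta>"
    and V1: "V \<in> Cset n \<Theta> (tau \<Theta>)" and V2: "V \<in> Cset n \<Theta> (tau_opp n \<Theta>)"
  shows "ginv n k V \<noteq> 0"
proof -
  have VI: "V \<in> iso_flags n \<Theta>" using V1 unfolding Cset_def by auto
  let ?P = "projm (2*n) (V k)"
  have P: "pspec (2*n) (V k) ?P" using projm_iso[OF VI k] .
  have kn: "1 \<le> k" "k \<le> n" using Th k by auto
  have ds1: "direct_sum_eq (2*n) (V k) (vS {1..2*n-k})" using Cset_tau[OF V1 k Th] .
  have ds2: "direct_sum_eq (2*n) (V k) (vS {k+1..2*n})" using Cset_tau_opp[OF V2 k Th] .
  have Vsub: "lsub (V k)" "V k \<subseteq> vS {1..2*n}" using iso_flagsD[OF VI k] by auto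
  have key: "y = 0\<^sub>v k" if y: "y \<in> carrier_vec k" and
    zero: "\<forall>a\<in>A. mvec (2*n) ?P (\<lambda>c. if c \<in> {2*n-k+1..2*n} then y $ (c - (2*n-k+1)) else 0) a = 0"
    and A: "A = {1..k} \<or> A = {2*n-k+1..2*n}" for y A
  proof -
    define x where "x = (\<lambda>c. if c \<in> {2*n-k+1..2*n} then y $ (c - (2*n-k+1)) else 0)"
    have xS: "x \<in> vS {2*n-k+1..2*n}" unfolding x_def vS_def by auto
    have xR: "x \<in> Rn (2*n)" using xS vS_mono[of "{2*n-k+1..2*n}" "{1..2*n}"] by (auto simp: Rn_vS)
    have Px: "mvec (2*n) ?P x \<in> V k" using P xR unfolding pspec_def by blast
    have PxR: "mvec (2*n) ?P x \<in> vS {1..2*n}" using Px Vsub by auto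
    have Px0: "mvec (2*n) ?P x = (\<lambda>c. 0)"
    proof (cases "A = {1..k}")
      case True
      have "mvec (2*n) ?P x \<in> vS {k+1..2*n}" using PxR zero True unfolding x_def vS_def by auto
      then show ?thesis using direct_sumD(2)[OF ds2 Px] by blast
    next
      case False
      then have A2: "A = {2*n-k+1..2*n}" using A by auto
      have "mvec (2*n) ?P x \<in> vS {1..2*n-k}" using PxR zero A2 unfolding x_def vS_def by auto
      then show ?thesis using direct_sumD(2)[OF ds1 Px] by blast
    qed
    have orth: "vinner (2*n) x w = 0" if "w \<in> V k" for w
    proof -
      have "vinner (2*n) (vsub x (mvec (2*n) ?P x)) w = 0" using P xR that unfolding pspec_def by blast
      moreover have "vsub x (mvec (2*n) ?P x) = x" using Px0 by (auto simp: vsub_def)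
      ultimately show ?thesis by simp
    qed
    obtain a b where ab: "a \<in> V k" "b \<in> vS {1..2*n-k}" "x = (\<lambda>c. a c + b c)"
      using direct_sumD(1)[OF ds1 xR] by blast
    have "vinner (2*n) x x = vinner (2*n) x a + vinner (2*n) x b"
      by (subst (2) ab(3)) (simp add: vinner_def algebra_simps sum.distrib)
    also have "vinner (2*n) x b = 0"
      unfolding vinner_def
    proof (intro sum.neutral ballI)
      fix c assume c: "c \<in> {1..2*n}"
      show "x c * b c = 0"
      proof (cases "c \<le> 2*n-k")
        case True then have "x c = 0" using xS unfolding vS_def by auto
        then show ?thesis by simp
      next
        case False then have "b c = 0" using ab(2) unfolding vS_def by auto
        then show ?thesis by simp
      qed
    qed
    finally have xx: "vinner (2*n) x x = 0" using orth[OF ab(1)] by simp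
    show ?thesis
    proof (rule eq_vecI)
      fix j assume "j < dim_vec (0\<^sub>v k)"
      then have j: "j < k" by simp
      have "2*n-k+1+j \<in> {1..2*n}" using j kn by auto
      then have "x (2*n-k+1+j) = 0" using vinner_self_zero[OF xx] by blast
      moreover have "2*n-k+1+j \<in> {2*n-k+1..2*n}" "2*n-k+1+j - (2*n-k+1) = j" using j kn by auto
      ultimately show "y $ j = 0\<^sub>v k $ j" using j unfolding x_def by simp
    qed (use y in auto)
  qed
  have mv: "mvec (2*n) ?P (\<lambda>c. if c \<in> {2*n-k+1..2*n} then y $ (c - (2*n-k+1)) else 0) a =
      (\<Sum>l<k. ?P a (2*n-k+1+l) * y $ l)" for y a
  proof -
    have "mvec (2*n) ?P (\<lambda>c. if c \<in> {2*n-k+1..2*n} then y $ (c - (2*n-k+1)) else 0) a =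
        (\<Sum>c\<in>{2*n-k+1..2*n}. (if c \<in> {2*n-k+1..2*n} then y $ (c - (2*n-k+1)) else 0) * ?P a c)"
      by (subst mvec_vS[where S="{2*n-k+1..2*n}"]) (auto simp: vS_def)
    also have "\<dots> = (\<Sum>l<k. (if 2*n-k+1+l \<in> {2*n-k+1..2*n} then y $ (2*n-k+1+l - (2*n-k+1)) else 0) * ?P a (2*n-k+1+l))"
      by (rule sum_shift_B[of k n "\<lambda>c. (if c \<in> {2*n-k+1..2*n} then y $ (c - (2*n-k+1)) else 0) * ?P a c"]) (use kn in auto)
    also have "\<dots> = (\<Sum>l<k. y $ l * ?P a (2*n-k+1+l))"
    proof (rule sum.cong[OF refl])
      fix l assume "l \<in> {..<k}"
      then have "2*n-k+1+l \<in> {2*n-k+1..2*n}" "2*n-k+1+l - (2*n-k+1) = l" using kn by auto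
      then show "(if 2*n-k+1+l \<in> {2*n-k+1..2*n} then y $ (2*n-k+1+l - (2*n-k+1)) else 0) * ?P a (2*n-k+1+l) = y $ l * ?P a (2*n-k+1+l)"
        by simp
    qed
    finally show ?thesis by (simp add: mult.commute)
  qed
  have dT: "det (subT n k ?P) \<noteq> 0"
  proof
    assume "det (subT n k ?P) = 0"
    then obtain y where y: "y \<in> carrier_vec k" "y \<noteq> 0\<^sub>v k" "subT n k ?P *\<^sub>v y = 0\<^sub>v k"
      using det_0_iff_vec_prod_zero[OF subT_carrier] by blast
    have "\<forall>a\<in>{1..k}. mvec (2*n) ?P (\<lambda>c. if c \<in> {2*n-k+1..2*n} then y $ (c - (2*n-k+1)) else 0) a = 0"
    proof
      fix a assume a: "a \<in> {1..k}"
      have a1: "a - 1 < k" using a by auto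
      have "(subT n k ?P *\<^sub>v y) $ (a - 1) = 0" using y(3) a1 by simp
      have "(\<Sum>l<k. ?P a (2*n-k+1+l) * y $ l) = 0"
      proof -
        have "Suc (a - Suc 0) = a" using a by auto
        then show ?thesis using \<open>(subT n k ?P *\<^sub>v y) $ (a - 1) = 0\<close> a1 y(1)
          by (simp add: subT_def scalar_prod_def lessThan_atLeast0)
      qed
      then show "mvec (2*n) ?P (\<lambda>c. if c \<in> {2*n-k+1..2*n} then y $ (c - (2*n-k+1)) else 0) a = 0"
        using mv by simp
    qed
    then have "y = 0\<^sub>v k" using key[OF y(1)] by blast
    then show False using y(2) by simp
  qed
  have dB: "det (subB n k ?P) \<noteq> 0"
  proof
    assume "det (subB n k ?P) = 0"
    then obtain y where y: "y \<in> carrier_vec k" "y \<noteq> 0\<^sub>v k" "subB n k ?P *\<^sub>v y = 0\<^sub>v k"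
      using det_0_iff_vec_prod_zero[OF subB_carrier] by blast
    have "\<forall>a\<in>{2*n-k+1..2*n}. mvec (2*n) ?P (\<lambda>c. if c \<in> {2*n-k+1..2*n} then y $ (c - (2*n-k+1)) else 0) a = 0"
    proof
      fix a assume a: "a \<in> {2*n-k+1..2*n}"
      have i: "a - (2*n-k+1) < k" using a kn by auto
      have "(subB n k ?P *\<^sub>v y) $ (a - (2*n-k+1)) = 0" using y(3) i by simp
      moreover have "2*n-k+1 + (a - (2*n-k+1)) = a" using a by auto
      ultimately have "(\<Sum>l<k. ?P a (2*n-k+1+l) * y $ l) = 0"
        using i y(1) by (simp add: subB_def scalar_prod_def lessThan_atLeast0)
      then show "mvec (2*n) ?P (\<lambda>c. if c \<in> {2*n-k+1..2*n} then y $ (c - (2*n-k+1)) else 0) a = 0"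
        using mv by simp
    qed
    then have "y = 0\<^sub>v k" using key[OF y(1)] by blast
    then show False using y(2) by simp
  qed
  show ?thesis unfolding ginv_def using dT dB by simp
qed


lemma ginv_sign:
  assumes Th: "\<Theta> \<subseteq> {1..n}" and Tne: "\<Theta> \<noteq> {}" and k: "k \<in> \<Theta>" "odd k"
    and V1: "V \<in> Cset n \<Theta> (tau \<Theta>)" and IV: "iota n \<Theta> V \<in> iso_flags n \<Theta>"
  shows "ginv n k V * ginv n k (iota n \<Theta> V) \<le> 0"
proof -
  let ?u = "uV n \<Theta> V"
  have VI: "V \<in> iso_flags n \<Theta>" using V1 unfolding Cset_def by auto
  have kn: "1 \<le> k" "k \<le> n" using Th k by auto
  have k2: "k \<le> 2*n" using kn by auto
  have uM: "?u \<in> Mats (2*n)" using u_Mats[OF Th Tne V1] .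
  have uS: "?u \<in> Sp n" using u_Sp[OF Th Tne V1] .
  have cp: "colprop n \<Theta> ?u" using u_colprop[OF Th Tne V1] .
  have tri: "(\<forall>k'. c < k' \<longrightarrow> ?u k' c = 0) \<and> ?u c c = 1" if "c \<in> {1..2*n}" for c
    using colprop_low[OF Th cp that] colprop_diag[OF Th cp that] by auto
  have act: "act n ?u (tau_opp n \<Theta>) = V" using u_act[OF Th Tne V1] .
  have Vk: "V k = mvec (2*n) ?u ` vS {2*n-k+1..2*n}"
    using fun_cong[OF act, of k] unfolding act_def tau_opp_vS[OF k(1)] by simp
  have mi: "minv (2*n) ?u = vinv n ?u" by (rule minv_vinv[OF uM uS tri])
  have "iota n \<Theta> V = act n (minv (2*n) (u_of n \<Theta> V)) (tau_opp n \<Theta>)" unfolding iota_def ..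
  then have io: "iota n \<Theta> V = act n (vinv n ?u) (tau_opp n \<Theta>)"
    by (simp only: u_of_eq[OF Th Tne V1] mi)
  have IVk: "iota n \<Theta> V k = mvec (2*n) (vinv n ?u) ` vS {2*n-k+1..2*n}"
    unfolding io act_def tau_opp_vS[OF k(1)] by simp
  obtain Q where Q: "ginv n k V = det (subT n k ?u) * det (subB n k ?u) * (det Q)^2"
    using basis_formula[OF projm_iso[OF VI k(1)] Vk k2] unfolding ginv_def by blast
  obtain Q' where Q': "ginv n k (iota n \<Theta> V) = det (subT n k (vinv n ?u)) * det (subB n k (vinv n ?u)) * (det Q')^2"
    using basis_formula[OF projm_iso[OF IV k(1)] IVk k2] unfolding ginv_def by blast
  have b1: "det (subB n k ?u) = 1" by (rule det_subB_unitri[OF tri k2])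
  have b2: "det (subB n k (vinv n ?u)) = 1" by (rule det_subB_unitri[OF vinv_tri[OF tri] k2])
  have t: "det (subT n k (vinv n ?u)) = - det (subT n k ?u)" by (rule subT_vinv[OF k(2) k2])
  have "ginv n k V * ginv n k (iota n \<Theta> V) = - ((det (subT n k ?u) * det Q * det Q')^2)"
    unfolding Q Q' b1 b2 t by (simp add: power2_eq_square algebra_simps)
  then show ?thesis by simp
qed

lemma det_mat_expand:
  "det (mat k k (\<lambda>(i,j). e i j)) = (\<Sum>p\<in>{p. p permutes {0..<k}}. signof p * (\<Prod>i\<in>{0..<k}. e i (p i)))"
proof -
  have "det (mat k k (\<lambda>(i,j). e i j)) = (\<Sum>p\<in>{p. p permutes {0..<k}}. signof p * (\<Prod>i = 0..<k. mat k k (\<lambda>(i,j). e i j) $$ (i, p i)))"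
    by (rule det_def') auto
  also have "\<dots> = (\<Sum>p\<in>{p. p permutes {0..<k}}. signof p * (\<Prod>i\<in>{0..<k}. e i (p i)))"
  proof (rule sum.cong[OF refl])
    fix p assume "p \<in> {p. p permutes {0..<k}}"
    then have p: "p permutes {0..<k}" by simp
    have "(\<Prod>i = 0..<k. mat k k (\<lambda>(i,j). e i j) $$ (i, p i)) = (\<Prod>i\<in>{0..<k}. e i (p i))"
    proof (rule prod.cong[OF refl])
      fix i assume i: "i \<in> {0..<k}"
      then have "p i \<in> {0..<k}" using permutes_in_image[OF p] by simp
      then show "mat k k (\<lambda>(i,j). e i j) $$ (i, p i) = e i (p i)" using i by simp
    qed
    then show "signof p * (\<Prod>i = 0..<k. mat k k (\<lambda>(i,j). e i j) $$ (i, p i)) = signof p * (\<Prod>i\<in>{0..<k}. e i (p i))"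
      by simp
  qed
  finally show ?thesis .
qed

lemma det_cont:
  assumes "\<And>i j. continuous_map X euclideanreal (\<lambda>W. e W i j)"
  shows "continuous_map X euclideanreal (\<lambda>W. det (mat k k (\<lambda>(i,j). e W i j)))"
  unfolding det_mat_expand
  by (intro continuous_map_sum continuous_map_real_mult_left continuous_map_prod assms) (auto intro: finite_permutations)

lemma coord_cont: "continuous_map euclidean euclideanreal (\<lambda>F::nat \<Rightarrow> matr. F k a b)"
proof -
  have "continuous_on UNIV ((\<lambda>v::vect. v b) \<circ> (\<lambda>M::matr. M a) \<circ> (\<lambda>F::nat \<Rightarrow> matr. F k))"
    by (intro continuous_on_compose continuous_on_subset[OF continuous_on_product_coordinates]) auto
  then show ?thesis by (simp add: o_def)
qed

lemma embed_cont: "continuous_map (flag_top n \<Theta>) euclideanreal (\<lambda>W. flag_embed n \<Theta> W k a b)"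
  using continuous_map_pullback[OF coord_cont, of "iso_flags n \<Theta>" "flag_embed n \<Theta>" k a b]
  unfolding flag_top_def o_def .

lemma ginv_cont:
  assumes k: "k \<in> \<Theta>"
  shows "continuous_map (flag_top n \<Theta>) euclideanreal (ginv n k)"
proof -
  have eq: "ginv n k = (\<lambda>W. det (mat k k (\<lambda>(i,j). flag_embed n \<Theta> W k (i+1) (2*n-k+1+j))) *
                          det (mat k k (\<lambda>(i,j). flag_embed n \<Theta> W k (2*n-k+1+i) (2*n-k+1+j))))"
    unfolding ginv_def subT_def subB_def flag_embed_def using k by auto
  show ?thesis unfolding eq
    by (intro continuous_map_real_mult det_cont embed_cont)
qed


theorem mainTheorem11:
  fixes n :: nat and \<Theta> :: "nat set"
  assumes "\<Theta> \<noteq> {}" and "\<Theta> \<subseteq> {1..n}" and "\<exists>k\<in>\<Theta>. odd k"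
  shows "Property_I n \<Theta>"
proof -
  note Tne = assms(1) and Th = assms(2)
  obtain k where k: "k \<in> \<Theta>" "odd k" using assms(3) by blast
  let ?S = "Cset n \<Theta> (tau \<Theta>) \<inter> Cset n \<Theta> (tau_opp n \<Theta>)"
  let ?X = "subtopology (flag_top n \<Theta>) ?S"
  have topX: "topspace ?X \<subseteq> ?S \<inter> iso_flags n \<Theta>"
    unfolding flag_top_def by (auto simp: topspace_pullback_topology)
  have gc: "continuous_map ?X euclideanreal (ginv n k)"
    using continuous_map_from_subtopology[OF ginv_cont[OF k(1)]] .
  show ?thesis unfolding Property_I_def
  proof
    fix K assume K: "K \<in> connected_components_of ?X"
    have Kne: "K \<noteq> {}" using nonempty_connected_components_of[OF K] .
    have Kc: "connectedin ?X K" using connectedin_connected_components_of[OF K] .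
    have KS: "K \<subseteq> ?S \<inter> iso_flags n \<Theta>" using connected_components_of_subset[OF K] topX by blast
    have "connectedin euclideanreal (ginv n k ` K)" using connectedin_continuous_map_image[OF gc Kc] .
    then have "is_interval (ginv n k ` K)" by (simp add: is_interval_connected_1)
    then have ivl: "\<And>a b x. a \<in> ginv n k ` K \<Longrightarrow> b \<in> ginv n k ` K \<Longrightarrow> a \<le> x \<Longrightarrow> x \<le> b \<Longrightarrow> x \<in> ginv n k ` K"
      unfolding is_interval_1 by blast
    have nz: "ginv n k W \<noteq> 0" if "W \<in> K" for W
      using ginv_nonzero[OF Th k(1)] KS that by blast
    show "iota n \<Theta> ` K \<noteq> K"
    proof
      assume eq: "iota n \<Theta> ` K = K"
      obtain V where V: "V \<in> K" using Kne by blast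
      have IV: "iota n \<Theta> V \<in> K" using eq V by blast
      have V1: "V \<in> Cset n \<Theta> (tau \<Theta>)" using KS V by blast
      have IVI: "iota n \<Theta> V \<in> iso_flags n \<Theta>" using KS IV by blast
      have le: "ginv n k V * ginv n k (iota n \<Theta> V) \<le> 0" using ginv_sign[OF Th Tne k V1 IVI] .
      have a: "ginv n k V \<noteq> 0" and b: "ginv n k (iota n \<Theta> V) \<noteq> 0" using nz V IV by auto
      have ga: "ginv n k V \<in> ginv n k ` K" and gb: "ginv n k (iota n \<Theta> V) \<in> ginv n k ` K" using V IV by auto
      have "0 \<in> ginv n k ` K"
      proof (cases "ginv n k V < 0")
        case True
        then have "ginv n k (iota n \<Theta> V) > 0" using le b by (metis mult_neg_neg not_le linorder_neqE_linordered_idom less_eq_real_def)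
        then show ?thesis using ivl[OF ga gb, of 0] True by auto
      next
        case False
        then have "ginv n k V > 0" using a by auto
        then have "ginv n k (iota n \<Theta> V) < 0" using le b by (metis mult_pos_pos not_le linorder_neqE_linordered_idom)
        then show ?thesis using ivl[OF gb ga, of 0] \<open>ginv n k V > 0\<close> by auto
      qed
      then show False using nz by auto
    qed
  qed
qed


end
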